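(* For $n\ge1$, $$U(qt_1,t_2,\ldots,t_n)=-q^{1/2}t_1\cdots t_n\sum_{\pi\in\Pi^\circ_n}(-1)^{n+\ell(\pi)}U^\pi(t_1,\ldots,t_n),$$ as meromorphic functions, where for $\pi=\{\pi_1,\ldots,\pi_\ell\}$, $U^\pi(t)=U\big(\prod_{k\in\pi_1}t_k,\ldots,\prod_{k\in\pi_\ell}t_k\big)$.
   Context: Fix $q$, $0<|q|<1$, with $q^{1/2}$ chosen. With $(a)_\infty=\prod_{j\ge0}(1-aq^j)$, $\Theta(x)=(q)_\infty^{-2}(x^{1/2}-x^{-1/2})(qx)_\infty(q/x)_\infty$ and $\Theta^{(k)}=(x\frac d{dx})^k\Theta$. For $r\ge1$, $$U(t_1,\ldots,t_r)=\sum_{\sigma\in\mathfrak S(r)}\frac{\det\Big(\frac{\Theta^{(j-i+1)}(t_{\sigma(1)}\cdots t_{\sigma(r-j)})}{(j-i+1)!}\Big)_{i,j=1}^r}{\Theta(t_{\sigma(1)})\Theta(t_{\sigma(1)}t_{\sigma(2)})\cdots\Theta(t_{\sigma(1)}\cdots t_{\sigma(r)})},$$ empty products $=1$, $1/(-k)!:=0$ for $k\ge1$, square roots of products being products of square roots (and $(qt_1)^{1/2}=q^{1/2}t_1^{1/2}$); $U$ is symmetric in its arguments. $\Pi^\circ_n$ is the set of set partitions of $\{1,\ldots,n\}$ into nonempty blocks having at most one block of cardinality $>1$, that block (if present) containing $1$; $\ell(\pi)$ is the number of blocks. *)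

theory Defs
  imports "HOL-Analysis.Analysis" "HOL-Library.Disjoint_Sets" "HOL-Combinatorics.Permutations"
    "Jordan_Normal_Form.Determinant"
begin

text \<open>Everything is parametrised by square roots: a variable x of the paper is
  represented by a chosen square root s, x = s^2 (so x^(1/2) = s).  Square roots of
  products are products of square roots, as in the paper.\<close>

definition qpoch_inf :: "complex \<Rightarrow> complex \<Rightarrow> complex" where
  "qpoch_inf q a = (\<Prod>j. 1 - a * q ^ j)"

text \<open>theta q s = Theta(x) with x = s^2, x^(1/2) = s.\<close>
definition theta :: "complex \<Rightarrow> complex \<Rightarrow> complex" where
  "theta q s = (s - 1 / s) * qpoch_inf q (q * s\<^sup>2) * qpoch_inf q (q / s\<^sup>2)
               / (qpoch_inf q q)\<^sup>2"

text \<open>thetaD q k s = Theta^(k)(x) = (x d/dx)^k Theta (x), x = s^2;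
  in the variable s, x d/dx = (s/2) d/ds.\<close>
definition thetaD :: "complex \<Rightarrow> nat \<Rightarrow> complex \<Rightarrow> complex" where
  "thetaD q k = ((\<lambda>f s. s / 2 * deriv f s) ^^ k) (theta q)"

text \<open>U(t_1,...,t_r), given by the list of square roots [s_1,...,s_r] (t_i = s_i^2);
  indices are shifted to start at 0.\<close>
definition U :: "complex \<Rightarrow> complex list \<Rightarrow> complex" where
  "U q xs = (let r = length xs in
     \<Sum>\<sigma> \<in> {\<sigma>. \<sigma> permutes {..<r}}.
       (let P = (\<lambda>m. \<Prod>i<m. xs ! (\<sigma> i)) in
        det (mat r r (\<lambda>(i, j).
               let k = int j - int i + 1 in
               if k < 0 then 0 else thetaD q (nat k) (P (r - (j + 1))) / fact (nat k)))
        / (\<Prod>m\<in>{1..r}. theta q (P m))))"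

text \<open>Pi^circ_n on the index set {0..<n} (element 0 plays the role of 1).\<close>
definition Pi0 :: "nat \<Rightarrow> nat set set set" where
  "Pi0 n = {P. partition_on {..<n} P \<and>
               (\<forall>B\<in>P. \<forall>C\<in>P. card B > 1 \<and> card C > 1 \<longrightarrow> B = C) \<and>
               (\<forall>B\<in>P. card B > 1 \<longrightarrow> 0 \<in> B)}"

text \<open>U^pi(t): U applied to the block products, blocks listed by increasing minimum
  (U is symmetric, so the order is immaterial).\<close>
definition Upi :: "complex \<Rightarrow> nat set set \<Rightarrow> (nat \<Rightarrow> complex) \<Rightarrow> complex" where
  "Upi q P s = U q (map (\<lambda>m. \<Prod>k\<in>(THE B. B \<in> P \<and> Min B = m). s k)
                         (sorted_list_of_set (Min ` P)))"

end

theory Submission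
  imports Defs "HOL-Complex_Analysis.Complex_Analysis" "HOL-Combinatorics.Multiset_Permutations"
begin

lemma qpoch_abs_conv:
  fixes q a :: complex
  assumes "norm q < 1"
  shows "abs_convergent_prod (\<lambda>j. 1 - a * q ^ j)"
  unfolding abs_convergent_prod_conv_summable
proof -
  have "summable (\<lambda>j. norm a * norm q ^ j)"
    using assms by (intro summable_mult summable_geometric) simp
  moreover have "(\<lambda>j. norm (1 - a * q ^ j - 1)) = (\<lambda>j. norm a * norm q ^ j)"
    by (simp add: norm_mult norm_power)
  ultimately show "summable (\<lambda>j. norm (1 - a * q ^ j - 1))" by simp
qed

lemma qpoch_has_prod:
  fixes q a :: complex
  assumes "norm q < 1"
  shows "(\<lambda>j. 1 - a * q ^ j) has_prod qpoch_inf q a"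
  unfolding qpoch_inf_def
  using abs_convergent_prod_imp_convergent_prod[OF qpoch_abs_conv[OF assms]]
  by (rule convergent_prod_has_prod)

lemma qpoch_shift:
  fixes q a :: complex
  assumes "norm q < 1"
  shows "qpoch_inf q a = (1 - a) * qpoch_inf q (a * q)"
proof -
  have h: "(\<lambda>n. \<Prod>j<n. 1 - a * q ^ Suc j) \<longlonglongrightarrow> qpoch_inf q (a * q)"
    using has_prod_imp_tendsto'[OF qpoch_has_prod[OF assms, of "a*q"]] by (simp add: mult_ac)
  have e: "(\<Prod>j<Suc n. 1 - a * q ^ j) = (1 - a) * (\<Prod>j<n. 1 - a * q ^ Suc j)" for n
    by (subst prod.lessThan_Suc_shift) simp
  have "(\<lambda>n. \<Prod>j<Suc n. 1 - a * q ^ j) \<longlonglongrightarrow> (1 - a) * qpoch_inf q (a * q)"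
    unfolding e by (intro tendsto_mult h tendsto_const)
  moreover have "(\<lambda>n. \<Prod>j<Suc n. 1 - a * q ^ j) \<longlonglongrightarrow> qpoch_inf q a"
    using has_prod_imp_tendsto'[OF qpoch_has_prod[OF assms, of a]] by (rule LIMSEQ_Suc)
  ultimately show ?thesis using LIMSEQ_unique by blast
qed

lemma qpoch_holo:
  fixes q :: complex
  assumes q: "norm q < 1"
  shows "(\<lambda>a. qpoch_inf q a) holomorphic_on A"
proof (rule holomorphic_on_subset)
  define P where "P = (\<lambda>N a. \<Prod>j<N. 1 - a * q ^ j)"
  have ul: "uniform_limit (cball 0 R) P (\<lambda>a. qpoch_inf q a) sequentially" if R: "R > 0" for R
  proof -
    have uc: "uniformly_convergent_on (cball 0 R) P"
      unfolding P_def
    proof (rule uniformly_convergent_on_prod')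
      show "uniformly_convergent_on (cball 0 R) (\<lambda>N a. \<Sum>j<N. norm (1 - a * q ^ j - 1))"
      proof (rule Weierstrass_m_test')
        fix n and x :: complex assume "x \<in> cball 0 R"
        hence "norm x \<le> R" by simp
        thus "norm (norm (1 - x * q ^ n - 1)) \<le> R * norm q ^ n"
          by (simp add: norm_mult norm_power mult_right_mono)
      next
        show "summable (\<lambda>n. R * norm q ^ n)"
          using q by (intro summable_mult summable_geometric) simp
      qed
    next
      show "compact (cball (0::complex) R)" by simp
    next
      fix n show "continuous_on (cball 0 R) (\<lambda>a. 1 - a * q ^ n)"
        by (intro continuous_intros)
    qed
    then obtain g where g: "uniform_limit (cball 0 R) P g sequentially"
      by (auto simp: uniformly_convergent_on_def)
    also have "?this \<longleftrightarrow> uniform_limit (cball 0 R) P (\<lambda>a. qpoch_inf q a) sequentially"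
    proof (intro uniform_limit_cong)
      fix z :: complex assume "z \<in> cball 0 R"
      with g have "(\<lambda>n. P n z) \<longlonglongrightarrow> g z"
        by (metis tendsto_uniform_limitI)
      moreover have "(\<lambda>n. P n z) \<longlonglongrightarrow> qpoch_inf q z"
        using has_prod_imp_tendsto'[OF qpoch_has_prod[OF q, of z]] unfolding P_def .
      ultimately show "g z = qpoch_inf q z"
        using tendsto_unique by force
    qed auto
    finally show ?thesis .
  qed
  show "(\<lambda>a. qpoch_inf q a) holomorphic_on UNIV"
  proof (rule holomorphic_uniform_sequence)
    fix z :: complex
    have *: "uniform_limit (cball 0 (norm z + 1)) P (\<lambda>a. qpoch_inf q a) sequentially"
      by (rule ul) (auto intro: add_nonneg_pos)
    hence "uniform_limit (cball z 1) P (\<lambda>a. qpoch_inf q a) sequentially"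
      by (rule uniform_limit_on_subset) (simp add: cball_subset_cball_iff)
    thus "\<exists>d>0. cball z d \<subseteq> UNIV \<and> uniform_limit (cball z d) P (\<lambda>a. qpoch_inf q a) sequentially"
      by (intro exI[of _ 1]) auto
  next
    fix n show "P n holomorphic_on UNIV" unfolding P_def by (intro holomorphic_intros)
  qed auto
qed auto

lemma sum_Pow_insert:
  assumes "finite X" "x \<notin> X"
  shows "(\<Sum>J\<in>Pow (insert x X). f J) = (\<Sum>J\<in>Pow X. f J) + (\<Sum>J\<in>Pow X. f (insert x J))"
proof -
  have "(\<Sum>J\<in>Pow (insert x X). f J) = (\<Sum>J\<in>Pow X. f J) + (\<Sum>J\<in>insert x ` Pow X. f J)"
    unfolding Pow_insert by (rule sum.union_disjoint) (use assms in auto)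
  also have "(\<Sum>J\<in>insert x ` Pow X. f J) = (\<Sum>J\<in>Pow X. f (insert x J))"
    by (rule sum.reindex_cong[where l="insert x"]) (use assms in \<open>auto simp: inj_on_def\<close>)
  finally show ?thesis .
qed

lemma qpoch_holo':
  fixes q :: complex
  assumes "norm q < 1" "f holomorphic_on A"
  shows "(\<lambda>x. qpoch_inf q (f x)) holomorphic_on A"
  using holomorphic_on_compose[OF assms(2) qpoch_holo[OF assms(1)]] by (simp add: o_def)

lemma theta_holo:
  fixes q :: complex
  assumes "norm q < 1"
  shows "theta q holomorphic_on (- {0})"
  unfolding theta_def[abs_def]
  by (intro holomorphic_intros qpoch_holo'[OF assms]) auto

lemma thetaD_0: "thetaD q 0 = theta q"
  by (simp add: thetaD_def)

lemma thetaD_Suc: "thetaD q (Suc k) s = s / 2 * deriv (thetaD q k) s"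
  by (simp add: thetaD_def)

lemma thetaD_Suc': "thetaD q (Suc k) = (\<lambda>s. s / 2 * deriv (thetaD q k) s)"
  by (simp add: thetaD_def)

lemma thetaD_holo:
  fixes q :: complex
  assumes "norm q < 1"
  shows "thetaD q k holomorphic_on (- {0})"
proof (induction k)
  case 0 thus ?case using theta_holo[OF assms] by (simp add: thetaD_0)
next
  case (Suc k)
  show ?case unfolding thetaD_Suc'
    by (intro holomorphic_intros Suc) auto
qed

lemma thetaD_deriv:
  fixes q :: complex
  assumes "norm q < 1" "z \<noteq> 0"
  shows "(thetaD q k has_field_derivative (2 / z * thetaD q (Suc k) z)) (at z)"
proof -
  have "(thetaD q k has_field_derivative deriv (thetaD q k) z) (at z)"
    by (rule holomorphic_derivI[OF thetaD_holo[OF assms(1)]]) (use assms in auto)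
  moreover have "2 / z * thetaD q (Suc k) z = deriv (thetaD q k) z"
    using assms(2) by (simp add: thetaD_Suc)
  ultimately show ?thesis by simp
qed

lemma theta_one: "theta q 1 = 0"
  by (simp add: theta_def)

lemma theta_quasi_aux:
  fixes qh s X a b c :: complex
  assumes "qh \<noteq> 0" "s \<noteq> 0"
  shows "- X / (qh * s) * a * ((1 - 1 / s\<^sup>2) * b) / c = - (1 / (qh * s\<^sup>2)) * ((s - 1 / s) * (X * a) * b / c)"
  using assms by (simp add: field_simps power2_eq_square)

lemma theta_quasi:
  fixes q qh s :: complex
  assumes q: "norm q < 1" and qh: "qh\<^sup>2 = q" "q \<noteq> 0" and s: "s \<noteq> 0"
  shows "theta q (qh * s) = - (1 / (qh * s\<^sup>2)) * theta q s"
proof -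
  have qh0: "qh \<noteq> 0" using qh by auto
  let ?E = "qpoch_inf q"
  have sq: "(qh * s)\<^sup>2 = q * s\<^sup>2" using qh(1) by (simp add: power_mult_distrib)
  have e1: "?E (q * s\<^sup>2) = (1 - q * s\<^sup>2) * ?E (q * (qh * s)\<^sup>2)"
    unfolding sq using qpoch_shift[OF q, of "q * s\<^sup>2"] by (simp add: mult_ac)
  have e2: "?E (q / (qh * s)\<^sup>2) = (1 - 1 / s\<^sup>2) * ?E (q / s\<^sup>2)"
  proof -
    have "q / (qh * s)\<^sup>2 = 1 / s\<^sup>2" unfolding sq using qh(2) s by (simp add: field_simps)
    moreover have "1 / s\<^sup>2 * q = q / s\<^sup>2" by simp
    ultimately show ?thesis using qpoch_shift[OF q, of "1 / s\<^sup>2"] by simp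
  qed
  have "theta q (qh * s) = (qh * s - 1 / (qh * s)) * ?E (q * (qh * s)\<^sup>2) * ((1 - 1 / s\<^sup>2) * ?E (q / s\<^sup>2)) / (?E q)\<^sup>2"
    unfolding theta_def e2 ..
  also have "(qh * s - 1 / (qh * s)) = - (1 - q * s\<^sup>2) / (qh * s)"
    using qh qh0 s by (simp add: field_simps power2_eq_square)
  also have "- (1 - q * s\<^sup>2) / (qh * s) * ?E (q * (qh * s)\<^sup>2) * ((1 - 1 / s\<^sup>2) * ?E (q / s\<^sup>2)) / (?E q)\<^sup>2
      = - (1 / (qh * s\<^sup>2)) * ((s - 1 / s) * ((1 - q * s\<^sup>2) * ?E (q * (qh * s)\<^sup>2)) * ?E (q / s\<^sup>2) / (?E q)\<^sup>2)"
    by (rule theta_quasi_aux[OF qh0 s])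
  also have "\<dots> = - (1 / (qh * s\<^sup>2)) * theta q s"
    unfolding theta_def e1 ..
  finally show ?thesis .
qed

lemma inv_sq_deriv:
  fixes qh s :: complex
  assumes "qh \<noteq> 0" "s \<noteq> 0"
  shows "((\<lambda>z. - (1 / (qh * z\<^sup>2))) has_field_derivative (2 / (qh * s ^ 3))) (at s)"
proof -
  have "((\<lambda>z. - (1 / (qh * z\<^sup>2))) has_field_derivative
          - (- (1 * (qh * (of_nat 2 * s ^ (2 - 1) * 1))) / (qh * s\<^sup>2 * (qh * s\<^sup>2)))) (at s)"
    using assms by (intro derivative_eq_intros DERIV_inverse') auto
  moreover have "- (- (1 * (qh * (of_nat 2 * s ^ (2 - 1) * 1))) / (qh * s\<^sup>2 * (qh * s\<^sup>2))) = 2 / (qh * s ^ 3)"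
    using assms by (simp add: field_simps power2_eq_square power3_eq_cube)
  ultimately show ?thesis by simp
qed

lemma thetaD_quasi:
  fixes q qh :: complex
  assumes q: "norm q < 1" and qh: "qh\<^sup>2 = q" "q \<noteq> 0" and X: "finite X"
  shows "\<forall>s. s \<noteq> 0 \<longrightarrow> thetaD q (card X) (qh * s) =
     - (1 / (qh * s\<^sup>2)) * ((-1) ^ card X * (\<Sum>J\<in>Pow X. (-1) ^ card J * thetaD q (card J) s))"
  using X
proof (induction X rule: finite_induct)
  case empty
  then show ?case using theta_quasi[OF q qh] by (simp add: thetaD_0)
next
  case (insert x F)
  have qh0: "qh \<noteq> 0" using qh by auto
  define k where "k = card F"
  define S where "S = (\<lambda>z. \<Sum>J\<in>Pow F. (-1) ^ card J * thetaD q (card J) z)"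
  define S' where "S' = (\<lambda>z. \<Sum>J\<in>Pow F. (-1) ^ card J * (2 / z * thetaD q (Suc (card J)) z))"
  define R where "R = (\<lambda>z. - (1 / (qh * z\<^sup>2)) * ((-1) ^ k * S z))"
  show ?case
  proof (intro allI impI)
    fix s :: complex assume s: "s \<noteq> 0"
    have S_der: "(S has_field_derivative S' s) (at s)"
      unfolding S_def S'_def
      by (intro DERIV_sum DERIV_cmult thetaD_deriv[OF q s])
    have R_der: "(R has_field_derivative (2 / (qh * s ^ 3) * ((-1) ^ k * S s) + ((-1) ^ k * S' s) * - (1 / (qh * s\<^sup>2)))) (at s)"
      unfolding R_def by (intro DERIV_mult inv_sq_deriv[OF qh0 s] DERIV_cmult S_der)
    have ev: "eventually (\<lambda>z. thetaD q k (qh * z) = R z) (nhds s)"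
    proof -
      have "eventually (\<lambda>z. z \<in> - {0}) (nhds s)"
        using s by (intro eventually_nhds_in_open) auto
      thus ?thesis
        by eventually_elim (use insert.IH in \<open>auto simp: R_def S_def k_def\<close>)
    qed
    have ch: "((\<lambda>z. thetaD q k (qh * z)) has_field_derivative (2 / (qh * s) * thetaD q (Suc k) (qh * s)) * qh) (at s)"
      using DERIV_chain2[OF thetaD_deriv[OF q, of "qh * s" k] DERIV_cmult_Id[of qh s]] s qh0 by simp
    have "deriv (\<lambda>z. thetaD q k (qh * z)) s = deriv R s"
      by (rule deriv_cong_ev[OF ev refl])
    hence eq: "(2 / (qh * s) * thetaD q (Suc k) (qh * s)) * qh =
               2 / (qh * s ^ 3) * ((-1) ^ k * S s) + ((-1) ^ k * S' s) * - (1 / (qh * s\<^sup>2))"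
      using DERIV_imp_deriv[OF ch] DERIV_imp_deriv[OF R_der] by simp
    have D: "thetaD q (Suc k) (qh * s) = s / 2 * (2 / (qh * s ^ 3) * ((-1) ^ k * S s) + ((-1) ^ k * S' s) * - (1 / (qh * s\<^sup>2)))"
      using eq[symmetric] s qh0 by (simp add: field_simps)
    have S's: "s / 2 * S' s = (\<Sum>J\<in>Pow F. (-1) ^ card J * thetaD q (Suc (card J)) s)"
      unfolding S'_def sum_distrib_left using s by (intro sum.cong refl) (simp add: field_simps)
    have split: "(\<Sum>J\<in>Pow (insert x F). (-1) ^ card J * thetaD q (card J) s) =
        S s + (\<Sum>J\<in>Pow F. (-1) ^ Suc (card J) * thetaD q (Suc (card J)) s)"
    proof -
      have "(\<Sum>J\<in>Pow F. (-1) ^ card (insert x J) * thetaD q (card (insert x J)) s) =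
            (\<Sum>J\<in>Pow F. (-1) ^ Suc (card J) * thetaD q (Suc (card J)) s)"
        using insert.hyps by (intro sum.cong refl) (auto simp: card_insert_if finite_subset)
      thus ?thesis unfolding S_def sum_Pow_insert[OF insert.hyps] by simp
    qed
    have "thetaD q (card (insert x F)) (qh * s) = thetaD q (Suc k) (qh * s)"
      using insert.hyps by (simp add: k_def)
    also have "\<dots> = - (1 / (qh * s\<^sup>2)) * ((-1) ^ Suc k * (S s + - (s / 2 * S' s)))"
      unfolding D using s qh0 by (simp add: field_simps power2_eq_square power3_eq_cube)
    also have "S s + - (s / 2 * S' s) = (\<Sum>J\<in>Pow (insert x F). (-1) ^ card J * thetaD q (card J) s)"
      unfolding split S's by (simp add: sum_negf[symmetric])
    also have "Suc k = card (insert x F)" using insert.hyps by (simp add: k_def)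
    finally show "thetaD q (card (insert x F)) (qh * s) =
     - (1 / (qh * s\<^sup>2)) * ((-1) ^ card (insert x F) * (\<Sum>J\<in>Pow (insert x F). (-1) ^ card J * thetaD q (card J) s))" .
  qed
qed

definition Gmat :: "(nat \<Rightarrow> complex \<Rightarrow> complex) \<Rightarrow> (nat \<Rightarrow> complex) \<Rightarrow> nat \<Rightarrow> nat \<Rightarrow> complex mat" where
  "Gmat c P m l = mat m m (\<lambda>(i, j). if i = 0 then c (l + j + 1) (P (m - (j + 1)))
      else (let k = int j - int i + 1 in if k < 0 then 0 else c (nat k) (P (m - (j + 1)))))"

lemma Gmat_carrier: "Gmat c P m l \<in> carrier_mat m m"
  by (simp add: Gmat_def)

lemma Gmat_rec:
  assumes c0: "c 0 (P 0) = 0"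
  shows "det (Gmat c P (Suc m) l) = c (l + 1) (P m) * det (Gmat c P m 0) - c 0 (P m) * det (Gmat c P m (l + 1))"
proof (cases m)
  case 0
  have "det (Gmat c P 1 l) = (\<Sum>i<1. Gmat c P 1 l $$ (i, 0) * cofactor (Gmat c P 1 l) i 0)"
    by (rule laplace_expansion_column[OF Gmat_carrier]) simp
  also have "\<dots> = c (l + 1) (P 0)"
    by (simp add: Gmat_def cofactor_def mat_delete_def)
  finally show ?thesis using 0 c0 by (simp add: Gmat_def)
next
  case (Suc m')
  let ?A = "Gmat c P (Suc m) l"
  have "det ?A = (\<Sum>i<Suc m. ?A $$ (i, 0) * cofactor ?A i 0)"
    by (rule laplace_expansion_column[OF Gmat_carrier]) simp
  also have "\<dots> = (\<Sum>i<2. ?A $$ (i, 0) * cofactor ?A i 0)"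
  proof (rule sum.mono_neutral_right)
    show "\<forall>i\<in>{..<Suc m} - {..<2}. ?A $$ (i, 0) * cofactor ?A i 0 = 0"
      by (auto simp: Gmat_def)
  qed (use Suc in auto)
  also have "\<dots> = ?A $$ (0, 0) * cofactor ?A 0 0 + ?A $$ (1, 0) * cofactor ?A 1 0"
    by (simp add: numeral_2_eq_2)
  finally have dA: "det ?A = ?A $$ (0, 0) * cofactor ?A 0 0 + ?A $$ (1, 0) * cofactor ?A 1 0" .
  have d1: "mat_delete ?A 0 0 = Gmat c P m 0"
  proof (rule eq_matI)
    fix i j assume "i < dim_row (Gmat c P m 0)" "j < dim_col (Gmat c P m 0)"
    moreover have "nat (1 + int j) = Suc j" by simp
    ultimately show "mat_delete ?A 0 0 $$ (i, j) = Gmat c P m 0 $$ (i, j)"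
      by (auto simp: Gmat_def mat_delete_def Let_def) (simp add: algebra_simps)
  qed (auto simp: Gmat_def mat_delete_def)
  have d2: "mat_delete ?A 1 0 = Gmat c P m (l + 1)"
    by (rule eq_matI) (auto simp: Gmat_def mat_delete_def Let_def)
  show ?thesis
    unfolding dA cofactor_def d1 d2 using Suc by (simp add: Gmat_def)
qed

lemma Gmat_closed:
  assumes c0: "c 0 (P 0) = 0"
  shows "det (Gmat c P (Suc m) l) = (\<Sum>b<Suc m. (-1) ^ b * c (l + b + 1) (P (m - b)) *
            (\<Prod>i<b. c 0 (P (m - i))) * det (Gmat c P (m - b) 0))"
proof (induction m arbitrary: l)
  case 0
  show ?case using Gmat_rec[where c=c and P=P, OF c0, of 0 l] c0 by simp
next
  case (Suc m)
  have "det (Gmat c P (Suc (Suc m)) l) = c (l + 1) (P (Suc m)) * det (Gmat c P (Suc m) 0) -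
          c 0 (P (Suc m)) * det (Gmat c P (Suc m) (l + 1))"
    by (rule Gmat_rec[where c=c and P=P, OF c0])
  also have "det (Gmat c P (Suc m) (l + 1)) = (\<Sum>b<Suc m. (-1) ^ b * c (l + 1 + b + 1) (P (m - b)) *
            (\<Prod>i<b. c 0 (P (m - i))) * det (Gmat c P (m - b) 0))"
    by (rule Suc.IH)
  also have "c (l + 1) (P (Suc m)) * det (Gmat c P (Suc m) 0) - c 0 (P (Suc m)) * \<dots> =
     (\<Sum>b<Suc (Suc m). (-1) ^ b * c (l + b + 1) (P (Suc m - b)) *
            (\<Prod>i<b. c 0 (P (Suc m - i))) * det (Gmat c P (Suc m - b) 0))"
    unfolding sum.lessThan_Suc_shift[of _ "Suc m"] prod.lessThan_Suc_shift
    by (simp add: sum_distrib_left sum_negf[symmetric] algebra_simps)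
  finally show ?case .
qed

lemma prod_split_top:
  fixes b m :: nat
  assumes "b \<le> m"
  shows "(\<Prod>j\<in>{1..m}. f j) = (\<Prod>j\<in>{1..m-b}. f j) * (\<Prod>i<b. f (m - i))"
  using assms
proof (induction b)
  case 0 thus ?case by simp
next
  case (Suc b)
  have "(\<Prod>j\<in>{1..m-b}. f j) = (\<Prod>j\<in>{1..m-Suc b}. f j) * f (m - b)"
  proof -
    have "{1..m-b} = insert (m - b) {1..m - Suc b}" using Suc.prems by auto
    moreover have "m - b \<notin> {1..m - Suc b}" by auto
    ultimately show ?thesis by (simp add: mult.commute)
  qed
  thus ?case using Suc by (simp add: mult_ac)
qed

definition Fd :: "(nat \<Rightarrow> complex \<Rightarrow> complex) \<Rightarrow> (nat \<Rightarrow> complex) \<Rightarrow> nat \<Rightarrow> complex" where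
  "Fd c P r = det (Gmat c P r 0) / (\<Prod>m\<in>{1..r}. c 0 (P m))"

lemma Fd_rec:
  assumes c0: "c 0 (P 0) = 0" and nz: "\<And>j. j \<in> {1..Suc m} \<Longrightarrow> c 0 (P j) \<noteq> 0"
  shows "c 0 (P (Suc m)) * Fd c P (Suc m) = (\<Sum>b<Suc m. (-1) ^ b * c (b + 1) (P (m - b)) * Fd c P (m - b))"
proof -
  define Q where "Q = (\<lambda>k. \<Prod>j\<in>{1..k}. c 0 (P j))"
  have QS: "Q (Suc m) = c 0 (P (Suc m)) * Q m"
    unfolding Q_def by (simp add: atLeastAtMostSuc_conv mult.commute)
  have Qsplit: "Q m = Q (m - b) * (\<Prod>i<b. c 0 (P (m - i)))" if "b \<le> m" for b
    unfolding Q_def by (rule prod_split_top[OF that])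
  have Qnz: "Q k \<noteq> 0" if "k \<le> Suc m" for k
    unfolding Q_def using nz that by (auto simp: prod_zero_iff)
  have "c 0 (P (Suc m)) * Fd c P (Suc m) = det (Gmat c P (Suc m) 0) / Q m"
    using QS nz[of "Suc m"] unfolding Fd_def Q_def by simp
  also have "\<dots> = (\<Sum>b<Suc m. (-1) ^ b * c (b + 1) (P (m - b)) *
            (\<Prod>i<b. c 0 (P (m - i))) * det (Gmat c P (m - b) 0) / Q m)"
    unfolding Gmat_closed[where c=c and P=P, OF c0] sum_divide_distrib by simp
  also have "\<dots> = (\<Sum>b<Suc m. (-1) ^ b * c (b + 1) (P (m - b)) * Fd c P (m - b))"
  proof (intro sum.cong refl)
    fix b assume b: "b \<in> {..<Suc m}"
    hence "Q m = Q (m - b) * (\<Prod>i<b. c 0 (P (m - i)))" by (intro Qsplit) auto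
    moreover have "Q (m - b) \<noteq> 0" "(\<Prod>i<b. c 0 (P (m - i))) \<noteq> 0"
      using Qnz[of "m - b"] Qnz[of m] \<open>Q m = _\<close> by auto
    ultimately show "(-1) ^ b * c (b + 1) (P (m - b)) * (\<Prod>i<b. c 0 (P (m - i))) * det (Gmat c P (m - b) 0) / Q m
        = (-1) ^ b * c (b + 1) (P (m - b)) * Fd c P (m - b)"
      unfolding Fd_def by (simp add: field_simps Q_def)
  qed
  finally show ?thesis .
qed

lemma Fd_cong:
  assumes "\<And>j. j \<le> r \<Longrightarrow> P j = P' j"
  shows "Fd c P r = Fd c P' r"
proof -
  have "Gmat c P r 0 = Gmat c P' r 0"
    unfolding Gmat_def using assms by (intro eq_matI) (auto simp: Let_def)
  moreover have "(\<Prod>m\<in>{1..r}. c 0 (P m)) = (\<Prod>m\<in>{1..r}. c 0 (P' m))"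
    using assms by (intro prod.cong) auto
  ultimately show ?thesis by (simp add: Fd_def)
qed

definition cc :: "complex \<Rightarrow> nat \<Rightarrow> complex \<Rightarrow> complex" where
  "cc q k x = thetaD q k x / fact k"

definition FL :: "complex \<Rightarrow> complex list \<Rightarrow> complex" where
  "FL q vs = Fd (cc q) (\<lambda>m. prod_list (take m vs)) (length vs)"

definition Wl :: "complex \<Rightarrow> (nat \<Rightarrow> complex) \<Rightarrow> nat set \<Rightarrow> complex" where
  "Wl q w B = (\<Sum>ys\<in>permutations_of_set B. FL q (map w ys))"

lemma cc0: "cc q 0 = theta q"
  by (simp add: cc_def[abs_def] thetaD_def)

lemma U_term:
  assumes sig: "\<sigma> permutes {..<length xs}"
  shows "(let P = (\<lambda>m. \<Prod>i<m. xs ! (\<sigma> i)) in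
        det (mat (length xs) (length xs) (\<lambda>(i, j).
               let k = int j - int i + 1 in
               if k < 0 then 0 else thetaD q (nat k) (P (length xs - (j + 1))) / fact (nat k)))
        / (\<Prod>m\<in>{1..length xs}. theta q (P m))) = FL q (map (\<lambda>i. xs ! i) (map \<sigma> [0..<length xs]))"
proof -
  let ?r = "length xs"
  define P where "P = (\<lambda>m. \<Prod>i<m. xs ! (\<sigma> i))"
  have "FL q (map (\<lambda>i. xs ! i) (map \<sigma> [0..<?r])) =
      Fd (cc q) (\<lambda>m. prod_list (take m (map (\<lambda>i. xs ! i) (map \<sigma> [0..<?r])))) ?r"
    unfolding FL_def by simp
  also have "\<dots> = Fd (cc q) P ?r"
  proof (rule Fd_cong)
    fix j assume j: "j \<le> ?r"
    have "take j (map (\<lambda>i. xs ! i) (map \<sigma> [0..<?r])) = map (\<lambda>i. xs ! \<sigma> i) [0..<j]"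
      using j by (simp add: take_map min_def)
    also have "prod_list \<dots> = P j" unfolding P_def
      by (subst prod.distinct_set_conv_list[symmetric]) (auto simp: atLeast0LessThan)
    finally show "prod_list (take j (map (\<lambda>i. xs ! i) (map \<sigma> [0..<?r]))) = P j" .
  qed
  also have "\<dots> = det (mat ?r ?r (\<lambda>(i, j).
               let k = int j - int i + 1 in
               if k < 0 then 0 else thetaD q (nat k) (P (?r - (j + 1))) / fact (nat k)))
        / (\<Prod>m\<in>{1..?r}. theta q (P m))"
  proof -
    have "Gmat (cc q) P ?r 0 = mat ?r ?r (\<lambda>(i, j).
               let k = int j - int i + 1 in
               if k < 0 then 0 else thetaD q (nat k) (P (?r - (j + 1))) / fact (nat k))"
    proof (rule eq_matI)
      fix i j assume "i < dim_row (mat ?r ?r (\<lambda>(i, j).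
               let k = int j - int i + 1 in
               if k < 0 then 0 else thetaD q (nat k) (P (?r - (j + 1))) / fact (nat k)))"
        "j < dim_col (mat ?r ?r (\<lambda>(i, j).
               let k = int j - int i + 1 in
               if k < 0 then 0 else thetaD q (nat k) (P (?r - (j + 1))) / fact (nat k)))"
      moreover have "nat (int j + 1) = j + 1" by simp
      ultimately show "Gmat (cc q) P ?r 0 $$ (i, j) = mat ?r ?r (\<lambda>(i, j).
               let k = int j - int i + 1 in
               if k < 0 then 0 else thetaD q (nat k) (P (?r - (j + 1))) / fact (nat k)) $$ (i, j)"
        by (auto simp: Gmat_def Let_def cc_def)
    qed (auto simp: Gmat_def)
    thus ?thesis unfolding Fd_def cc0 by simp
  qed
  finally show ?thesis unfolding P_def by (simp add: Let_def)
qed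

lemma sum_permutes_lists:
  "(\<Sum>\<sigma>\<in>{\<sigma>. \<sigma> permutes {..<r}}. f (map \<sigma> [0..<r])) = (\<Sum>ys\<in>permutations_of_set {..<r}. f ys)"
proof (rule sum.reindex_bij_witness[where i = "\<lambda>ys i. if i < r then ys ! i else i" and j = "\<lambda>\<sigma>. map \<sigma> [0..<r]"])
  fix \<sigma> assume "\<sigma> \<in> {\<sigma>. \<sigma> permutes {..<r}}"
  hence sig: "\<sigma> permutes {..<r}" by simp
  show "(\<lambda>i. if i < r then map \<sigma> [0..<r] ! i else i) = \<sigma>"
  proof
    fix i show "(if i < r then map \<sigma> [0..<r] ! i else i) = \<sigma> i"
      using permutes_not_in[OF sig, of i] by auto
  qed
  have "set (map \<sigma> [0..<r]) = {..<r}"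
    using permutes_image[OF sig] by (simp add: atLeast0LessThan)
  moreover have "distinct (map \<sigma> [0..<r])"
    using permutes_inj_on[OF sig] by (simp add: distinct_map)
  ultimately show "map \<sigma> [0..<r] \<in> permutations_of_set {..<r}" by (rule permutations_of_setI)
next
  fix ys assume ys: "ys \<in> permutations_of_set {..<r}"
  have len: "length ys = r" using length_finite_permutations_of_set[OF ys] by simp
  show "map (\<lambda>i. if i < r then ys ! i else i) [0..<r] = ys"
    using len by (simp add: list_eq_iff_nth_eq)
  have "bij_betw ((!) ys) {..<r} {..<r}"
    using permutations_of_setD[OF ys] len by (intro bij_betw_nth) auto
  moreover have "bij_betw (\<lambda>i. if i < r then ys ! i else i) {..<r} {..<r} = bij_betw ((!) ys) {..<r} {..<r}"
    by (rule bij_betw_cong) simp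
  ultimately have "bij_betw (\<lambda>i. if i < r then ys ! i else i) {..<r} {..<r}"
    by simp
  hence "(\<lambda>i. if i < r then ys ! i else i) permutes {..<r}"
  proof (rule bij_imp_permutes)
    fix x :: nat assume "x \<notin> {..<r}"
    thus "(if x < r then ys ! x else x) = x" by simp
  qed
  thus "(\<lambda>i. if i < r then ys ! i else i) \<in> {\<sigma>. \<sigma> permutes {..<r}}" by simp
qed simp

lemma U_eq_Wl: "U q xs = Wl q (\<lambda>i. xs ! i) {..<length xs}"
proof -
  let ?r = "length xs"
  have "U q xs = (\<Sum>\<sigma>\<in>{\<sigma>. \<sigma> permutes {..<?r}}. FL q (map (\<lambda>i. xs ! i) (map \<sigma> [0..<?r])))"
    unfolding U_def Let_def[of "length xs"] by (intro sum.cong refl) (simp only: mem_Collect_eq U_term)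
  also have "\<dots> = Wl q (\<lambda>i. xs ! i) {..<?r}"
    unfolding Wl_def by (rule sum_permutes_lists)
  finally show ?thesis .
qed

lemma Wl_cong:
  assumes "\<And>i. i \<in> B \<Longrightarrow> w i = w' i"
  shows "Wl q w B = Wl q w' B"
  unfolding Wl_def
proof (intro sum.cong refl)
  fix ys assume "ys \<in> permutations_of_set B"
  hence "set ys = B" by (rule permutations_of_setD)
  have m: "map w ys = map w' ys"
  proof (rule map_cong[OF refl])
    fix x assume "x \<in> set ys" thus "w x = w' x" using assms \<open>set ys = B\<close> by auto
  qed
  show "FL q (map w ys) = FL q (map w' ys)" by (simp only: m)
qed

lemma Wl_empty: "Wl q w {} = 1"
  by (simp add: Wl_def FL_def Fd_def Gmat_def)

lemma prod_list_perm:
  assumes "ys \<in> permutations_of_set A"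
  shows "prod_list (map w ys) = (\<Prod>i\<in>A. w i)"
proof -
  have "set ys = A" "distinct ys" using permutations_of_setD[OF assms] by auto
  thus ?thesis using prod.distinct_set_conv_list[of ys w] by simp
qed

lemma sum_perms_take:
  assumes B: "finite B" and a: "a \<le> card B"
  shows "(\<Sum>ys\<in>permutations_of_set B. h (take a ys)) =
         of_nat (fact (card B - a)) * (\<Sum>A\<in>{A. A \<subseteq> B \<and> card A = a}. \<Sum>zs\<in>permutations_of_set A. h zs)"
proof -
  let ?AA = "{A. A \<subseteq> B \<and> card A = a}"
  have "?AA \<subseteq> Pow B" by auto
  moreover have "finite (Pow B)" using B by simp
  ultimately have fin: "finite ?AA" by (rule finite_subset)
  have img: "(\<lambda>ys. set (take a ys)) ` permutations_of_set B \<subseteq> ?AA"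
  proof
    fix X assume "X \<in> (\<lambda>ys. set (take a ys)) ` permutations_of_set B"
    then obtain ys where ys: "ys \<in> permutations_of_set B" "X = set (take a ys)" by auto
    have "set ys = B" "distinct ys" "length ys = card B"
      using permutations_of_setD[OF ys(1)] length_finite_permutations_of_set[OF ys(1)] by auto
    moreover have "set (take a ys) \<subseteq> set ys" by (rule set_take_subset)
    moreover have "card (set (take a ys)) = a"
      using \<open>distinct ys\<close> \<open>length ys = card B\<close> a by (simp add: distinct_card)
    ultimately show "X \<in> ?AA" using ys by auto
  qed
  have "(\<Sum>ys\<in>permutations_of_set B. h (take a ys)) =
        (\<Sum>A\<in>?AA. \<Sum>ys\<in>{ys. ys \<in> permutations_of_set B \<and> set (take a ys) = A}. h (take a ys))"
    by (rule sum.group[symmetric, OF finite_permutations_of_set fin img])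
  also have "\<dots> = (\<Sum>A\<in>?AA. of_nat (fact (card B - a)) * (\<Sum>zs\<in>permutations_of_set A. h zs))"
  proof (rule sum.cong[OF refl])
    fix A assume A: "A \<in> ?AA"
    have AB: "A \<subseteq> B" "card A = a" using A by auto
    have finA: "finite A" using AB B finite_subset by auto
    have "(\<Sum>ys\<in>{ys. ys \<in> permutations_of_set B \<and> set (take a ys) = A}. h (take a ys)) =
          (\<Sum>p\<in>permutations_of_set A \<times> permutations_of_set (B - A). h (fst p))"
    proof (rule sum.reindex_bij_witness[where i = "\<lambda>p. fst p @ snd p" and j = "\<lambda>ys. (take a ys, drop a ys)"])
      fix ys assume "ys \<in> {ys. ys \<in> permutations_of_set B \<and> set (take a ys) = A}"
      hence ys: "ys \<in> permutations_of_set B" "set (take a ys) = A" by auto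
      have d: "set ys = B" "distinct ys" using permutations_of_setD[OF ys(1)] by auto
      show "fst (take a ys, drop a ys) @ snd (take a ys, drop a ys) = ys" by simp
      have "distinct (take a ys)" "distinct (drop a ys)" using d by auto
      moreover have "set (drop a ys) = B - A"
      proof -
        have "set ys = set (take a ys) \<union> set (drop a ys)"
          by (metis append_take_drop_id set_append)
        moreover have "set (take a ys) \<inter> set (drop a ys) = {}"
          using d(2) by (metis append_take_drop_id distinct_append)
        ultimately show ?thesis using d ys by auto
      qed
      ultimately show "(take a ys, drop a ys) \<in> permutations_of_set A \<times> permutations_of_set (B - A)"
        using ys by auto
      show "h (fst (take a ys, drop a ys)) = h (take a ys)" by simp
    next
      fix p assume p: "p \<in> permutations_of_set A \<times> permutations_of_set (B - A)"
      obtain zs us where zu: "p = (zs, us)" by (cases p)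
      have z: "set zs = A" "distinct zs" "length zs = a"
        using p zu permutations_of_setD[of zs A] length_finite_permutations_of_set[of zs A] AB by auto
      have u: "set us = B - A" "distinct us"
        using p zu permutations_of_setD[of us "B - A"] by auto
      show "(take a (fst p @ snd p), drop a (fst p @ snd p)) = p" using zu z by simp
      have "set (zs @ us) = B" using z u AB by auto
      moreover have "distinct (zs @ us)" using z u by auto
      ultimately show "fst p @ snd p \<in> {ys. ys \<in> permutations_of_set B \<and> set (take a ys) = A}"
        using zu z by auto
    qed
    also have "\<dots> = (\<Sum>zs\<in>permutations_of_set A. \<Sum>us\<in>permutations_of_set (B - A). h zs)"
      by (rule sum.cartesian_product'[where g = "\<lambda>p. h (fst p)", unfolded fst_conv])
    also have "\<dots> = (\<Sum>zs\<in>permutations_of_set A. of_nat (fact (card B - a)) * h zs)"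
    proof -
      have "card (permutations_of_set (B - A)) = fact (card B - a)"
        using B AB by (simp add: card_Diff_subset finA)
      thus ?thesis by simp
    qed
    finally show "(\<Sum>ys\<in>{ys. ys \<in> permutations_of_set B \<and> set (take a ys) = A}. h (take a ys)) =
          of_nat (fact (card B - a)) * (\<Sum>zs\<in>permutations_of_set A. h zs)"
      by (simp add: sum_distrib_left)
  qed
  also have "\<dots> = of_nat (fact (card B - a)) * (\<Sum>A\<in>?AA. \<Sum>zs\<in>permutations_of_set A. h zs)"
    by (simp add: sum_distrib_left)
  finally show ?thesis .
qed

lemma FL_rec:
  assumes ne: "vs \<noteq> []"
    and nz: "\<And>j. j \<in> {1..length vs} \<Longrightarrow> theta q (prod_list (take j vs)) \<noteq> 0"
  shows "theta q (prod_list vs) * FL q vs =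
    (\<Sum>b<length vs. (-1) ^ b * cc q (b + 1) (prod_list (take (length vs - 1 - b) vs)) *
        FL q (take (length vs - 1 - b) vs))"
proof -
  obtain m where m: "length vs = Suc m" using ne by (cases vs) auto
  define P where "P = (\<lambda>j. prod_list (take j vs))"
  have c0: "cc q 0 (P 0) = 0" by (simp add: P_def cc0 theta_one)
  have nz': "\<And>j. j \<in> {1..Suc m} \<Longrightarrow> cc q 0 (P j) \<noteq> 0"
    using nz m by (simp add: cc0 P_def)
  have "theta q (prod_list vs) * FL q vs = cc q 0 (P (Suc m)) * Fd (cc q) P (Suc m)"
    by (simp add: cc0 P_def FL_def m flip: m)
  also have "\<dots> = (\<Sum>b<Suc m. (-1) ^ b * cc q (b + 1) (P (m - b)) * Fd (cc q) P (m - b))"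
    by (rule Fd_rec[where c="cc q" and P=P, OF c0 nz'])
  also have "\<dots> = (\<Sum>b<length vs. (-1) ^ b * cc q (b + 1) (prod_list (take (length vs - 1 - b) vs)) *
        FL q (take (length vs - 1 - b) vs))"
  proof (rule sum.cong)
    fix b assume b: "b \<in> {..<length vs}"
    have "Fd (cc q) P (m - b) = FL q (take (m - b) vs)"
      unfolding FL_def using m by (auto intro!: Fd_cong simp: P_def min_def)
    thus "(-1) ^ b * cc q (b + 1) (P (m - b)) * Fd (cc q) P (m - b) =
          (-1) ^ b * cc q (b + 1) (prod_list (take (length vs - 1 - b) vs)) * FL q (take (length vs - 1 - b) vs)"
      using m by (simp add: P_def)
  qed (simp add: m)
  finally show ?thesis .
qed

lemma Wl_rec:
  assumes B: "finite B" "B \<noteq> {}"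
    and nz: "\<And>A. A \<subseteq> B \<Longrightarrow> A \<noteq> {} \<Longrightarrow> theta q (\<Prod>i\<in>A. w i) \<noteq> 0"
  shows "theta q (\<Prod>i\<in>B. w i) * Wl q w B =
    (\<Sum>A\<in>Pow B - {B}. (-1) ^ (card (B - A) - 1) * thetaD q (card (B - A)) (\<Prod>i\<in>A. w i) * Wl q w A)"
proof -
  define r where "r = card B"
  have r1: "r \<ge> 1" using B by (simp add: r_def card_gt_0_iff Suc_le_eq)
  define h where "h = (\<lambda>b zs. cc q (b + 1) (prod_list (map w zs)) * FL q (map w zs))"
  have step: "theta q (\<Prod>i\<in>B. w i) * FL q (map w ys) =
      (\<Sum>b<r. (-1) ^ b * h b (take (r - 1 - b) ys))" if ys: "ys \<in> permutations_of_set B" for ys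
  proof -
    have d: "set ys = B" "distinct ys" "length ys = r"
      using permutations_of_setD[OF ys] length_finite_permutations_of_set[OF ys] by (auto simp: r_def)
    have pt: "prod_list (take j (map w ys)) = (\<Prod>i\<in>set (take j ys). w i)" for j
      using d by (simp add: take_map prod.distinct_set_conv_list)
    have "theta q (prod_list (map w ys)) * FL q (map w ys) =
      (\<Sum>b<length (map w ys). (-1) ^ b * cc q (b + 1) (prod_list (take (length (map w ys) - 1 - b) (map w ys))) *
        FL q (take (length (map w ys) - 1 - b) (map w ys)))"
    proof (rule FL_rec)
      show "map w ys \<noteq> []" using d B by auto
      fix j assume j: "j \<in> {1..length (map w ys)}"
      have "set (take j ys) \<subseteq> B" using d set_take_subset by metis
      moreover have "set (take j ys) \<noteq> {}" using j d by (auto simp: take_eq_Nil)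
      ultimately show "theta q (prod_list (take j (map w ys))) \<noteq> 0" unfolding pt by (rule nz)
    qed
    moreover have "prod_list (map w ys) = (\<Prod>i\<in>B. w i)" by (rule prod_list_perm[OF ys])
    ultimately show ?thesis using d by (simp add: h_def take_map mult.assoc)
  qed
  have "theta q (\<Prod>i\<in>B. w i) * Wl q w B = (\<Sum>ys\<in>permutations_of_set B. \<Sum>b<r. (-1) ^ b * h b (take (r - 1 - b) ys))"
    unfolding Wl_def sum_distrib_left by (intro sum.cong refl step)
  also have "\<dots> = (\<Sum>b<r. (-1) ^ b * (\<Sum>ys\<in>permutations_of_set B. h b (take (r - 1 - b) ys)))"
    by (subst sum.swap) (simp add: sum_distrib_left)
  also have "\<dots> = (\<Sum>b<r. (-1) ^ b * (of_nat (fact (b + 1)) *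
      (\<Sum>A\<in>{A. A \<subseteq> B \<and> card A = r - 1 - b}. \<Sum>zs\<in>permutations_of_set A. h b zs)))"
  proof (intro sum.cong refl arg_cong2[where f = "(*)"])
    fix b assume b: "b \<in> {..<r}"
    have "r - (r - 1 - b) = b + 1" using b by auto
    thus "(\<Sum>ys\<in>permutations_of_set B. h b (take (r - 1 - b) ys)) = of_nat (fact (b + 1)) *
      (\<Sum>A\<in>{A. A \<subseteq> B \<and> card A = r - 1 - b}. \<Sum>zs\<in>permutations_of_set A. h b zs)"
      using sum_perms_take[OF B(1), of "r - 1 - b" "h b"] by (simp add: r_def)
  qed
  also have "\<dots> = (\<Sum>b<r. (\<Sum>A\<in>{A. A \<subseteq> B \<and> card A = r - 1 - b}.
        (-1) ^ b * thetaD q (b + 1) (\<Prod>i\<in>A. w i) * Wl q w A))"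
  proof (intro sum.cong refl)
    fix b assume b: "b \<in> {..<r}"
    have "(\<Sum>zs\<in>permutations_of_set A. h b zs) = cc q (b + 1) (\<Prod>i\<in>A. w i) * Wl q w A" for A
      unfolding Wl_def h_def sum_distrib_left by (intro sum.cong refl) (simp add: prod_list_perm)
    moreover have "of_nat (fact (b + 1)) * cc q (b + 1) x = thetaD q (b + 1) x" for x
    proof -
      have "(fact (b + 1) :: complex) \<noteq> 0" by (rule fact_nonzero)
      thus ?thesis unfolding cc_def of_nat_fact by (simp del: fact_Suc)
    qed
    ultimately show "(-1) ^ b * (of_nat (fact (b + 1)) * (\<Sum>A\<in>{A. A \<subseteq> B \<and> card A = r - 1 - b}. \<Sum>zs\<in>permutations_of_set A. h b zs))
        = (\<Sum>A\<in>{A. A \<subseteq> B \<and> card A = r - 1 - b}. (-1) ^ b * thetaD q (b + 1) (\<Prod>i\<in>A. w i) * Wl q w A)"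
      by (simp add: sum_distrib_left mult_ac)
  qed
  also have "\<dots> = (\<Sum>A\<in>Pow B - {B}. (-1) ^ (card (B - A) - 1) * thetaD q (card (B - A)) (\<Prod>i\<in>A. w i) * Wl q w A)"
    (is "_ = (\<Sum>A\<in>_. ?f A)")
  proof -
    have img: "card ` (Pow B - {B}) \<subseteq> {..<r}"
    proof
      fix k assume "k \<in> card ` (Pow B - {B})"
      then obtain A where "A \<subseteq> B" "A \<noteq> B" "k = card A" by auto
      thus "k \<in> {..<r}" using B(1) by (auto simp: r_def intro!: psubset_card_mono)
    qed
    have "(\<Sum>A\<in>Pow B - {B}. ?f A) = (\<Sum>k<r. \<Sum>A\<in>{A. A \<in> Pow B - {B} \<and> card A = k}. ?f A)"
      by (rule sum.group[symmetric]) (use B(1) img in auto)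
    also have "\<dots> = (\<Sum>b<r. \<Sum>A\<in>{A. A \<in> Pow B - {B} \<and> card A = r - Suc b}. ?f A)"
      by (rule sum.nat_diff_reindex[symmetric])
    also have "\<dots> = (\<Sum>b<r. (\<Sum>A\<in>{A. A \<subseteq> B \<and> card A = r - 1 - b}.
        (-1) ^ b * thetaD q (b + 1) (\<Prod>i\<in>A. w i) * Wl q w A))"
    proof (intro sum.cong)
      fix b assume b: "b \<in> {..<r}"
      show "{A. A \<in> Pow B - {B} \<and> card A = r - Suc b} = {A. A \<subseteq> B \<and> card A = r - 1 - b}"
        using b by (auto simp: r_def)
      fix A assume A: "A \<in> {A. A \<subseteq> B \<and> card A = r - 1 - b}"
      have "card (B - A) = b + 1"
        using A b B(1) by (auto simp: card_Diff_subset finite_subset r_def)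
      thus "?f A = (-1) ^ b * thetaD q (b + 1) (\<Prod>i\<in>A. w i) * Wl q w A" by simp
    qed simp
    finally show ?thesis by simp
  qed
  finally show ?thesis .
qed

lemma Wl_phi:
  assumes B: "finite B"
    and nz: "\<And>A. A \<subseteq> B \<Longrightarrow> A \<noteq> {} \<Longrightarrow> theta q (\<Prod>i\<in>A. w i) \<noteq> 0"
  shows "(\<Sum>A\<in>Pow B. (-1) ^ card (B - A) * thetaD q (card (B - A)) (\<Prod>i\<in>A. w i) * Wl q w A) = 0"
proof (cases "B = {}")
  case True
  thus ?thesis by (simp add: thetaD_0 theta_one Wl_empty)
next
  case False
  have "(\<Sum>A\<in>Pow B. (-1) ^ card (B - A) * thetaD q (card (B - A)) (\<Prod>i\<in>A. w i) * Wl q w A) =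
     theta q (\<Prod>i\<in>B. w i) * Wl q w B +
     (\<Sum>A\<in>Pow B - {B}. (-1) ^ card (B - A) * thetaD q (card (B - A)) (\<Prod>i\<in>A. w i) * Wl q w A)"
    by (subst sum.remove[of _ B]) (use B in \<open>auto simp: thetaD_0\<close>)
  also have "theta q (\<Prod>i\<in>B. w i) * Wl q w B =
    (\<Sum>A\<in>Pow B - {B}. (-1) ^ (card (B - A) - 1) * thetaD q (card (B - A)) (\<Prod>i\<in>A. w i) * Wl q w A)"
    by (rule Wl_rec[OF B False nz])
  also have "\<dots> = - (\<Sum>A\<in>Pow B - {B}. (-1) ^ card (B - A) * thetaD q (card (B - A)) (\<Prod>i\<in>A. w i) * Wl q w A)"
    unfolding sum_negf[symmetric]
  proof (intro sum.cong refl)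
    fix A assume A: "A \<in> Pow B - {B}"
    hence "card (B - A) \<noteq> 0" using B by (auto simp: card_eq_0_iff)
    then obtain k where k: "card (B - A) = Suc k" by (cases "card (B - A)") auto
    show "(-1) ^ (card (B - A) - 1) * thetaD q (card (B - A)) (\<Prod>i\<in>A. w i) * Wl q w A =
      - ((-1) ^ card (B - A) * thetaD q (card (B - A)) (\<Prod>i\<in>A. w i) * Wl q w A)"
      unfolding k by simp
  qed
  finally show ?thesis by simp
qed

lemma swap_pow:
  assumes X: "finite X"
  shows "(\<Sum>C\<in>Pow X. \<Sum>A\<in>Pow C. f A (C - A)) = (\<Sum>A\<in>Pow X. \<Sum>B\<in>Pow (X - A). f A B)"
proof -
  have "(\<Sum>C\<in>Pow X. \<Sum>A\<in>Pow C. f A (C - A)) = (\<Sum>p\<in>Sigma (Pow X) Pow. f (snd p) (fst p - snd p))"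
    by (subst sum.Sigma[where g="\<lambda>C A. f A (C - A)"]) (use X in \<open>auto intro: finite_subset simp: case_prod_beta\<close>)
  also have "\<dots> = (\<Sum>p\<in>Sigma (Pow X) (\<lambda>A. Pow (X - A)). f (fst p) (snd p))"
    by (rule sum.reindex_bij_witness[where i = "\<lambda>p. (fst p \<union> snd p, fst p)" and j = "\<lambda>p. (snd p, fst p - snd p)"])
       auto
  also have "\<dots> = (\<Sum>A\<in>Pow X. \<Sum>B\<in>Pow (X - A). f A B)"
    by (subst sum.Sigma[where g="\<lambda>A B. f A B"]) (use X in \<open>auto simp: case_prod_beta\<close>)
  finally show ?thesis .
qed

lemma swap_sym:
  assumes X: "finite X"
  shows "(\<Sum>S\<in>Pow X. \<Sum>K\<in>Pow (X - S). g S K) = (\<Sum>K\<in>Pow X. \<Sum>S\<in>Pow (X - K). g S K)"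
proof -
  have "(\<Sum>S\<in>Pow X. \<Sum>K\<in>Pow (X - S). g S K) = (\<Sum>p\<in>Sigma (Pow X) (\<lambda>S. Pow (X - S)). g (fst p) (snd p))"
    by (subst sum.Sigma[where g="\<lambda>S K. g S K"]) (use X in \<open>auto simp: case_prod_beta\<close>)
  also have "\<dots> = (\<Sum>p\<in>Sigma (Pow X) (\<lambda>K. Pow (X - K)). g (snd p) (fst p))"
    by (rule sum.reindex_bij_witness[where i = "\<lambda>p. (snd p, fst p)" and j = "\<lambda>p. (snd p, fst p)"])
       auto
  also have "\<dots> = (\<Sum>K\<in>Pow X. \<Sum>S\<in>Pow (X - K). g S K)"
    by (subst sum.Sigma[where g="\<lambda>K S. g S K"]) (use X in \<open>auto simp: case_prod_beta\<close>)
  finally show ?thesis .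
qed

lemma alt_pow:
  assumes "finite T"
  shows "(\<Sum>S\<in>Pow T. (-1) ^ card S :: complex) = (if T = {} then 1 else 0)"
  using assms
proof (induction T rule: finite_induct)
  case empty thus ?case by simp
next
  case (insert x F)
  have "(\<Sum>S\<in>Pow (insert x F). (-1) ^ card S :: complex) =
        (\<Sum>S\<in>Pow F. (-1) ^ card S) + (\<Sum>S\<in>Pow F. (-1) ^ card (insert x S))"
    by (rule sum_Pow_insert[OF insert.hyps])
  also have "(\<Sum>S\<in>Pow F. (-1) ^ card (insert x S) :: complex) = - (\<Sum>S\<in>Pow F. (-1) ^ card S)"
    unfolding sum_negf[symmetric]
    by (intro sum.cong refl) (use insert.hyps in \<open>auto simp: card_insert_if finite_subset\<close>)
  finally show ?case by simp
qed

lemma alt_collapse: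
  assumes T: "finite T"
  shows "(\<Sum>S\<in>Pow T. (-1) ^ card S * (\<Sum>M\<in>Pow (T - S). \<phi> M)) = (\<phi> T :: complex)"
proof -
  have "(\<Sum>S\<in>Pow T. (-1) ^ card S * (\<Sum>M\<in>Pow (T - S). \<phi> M)) =
        (\<Sum>S\<in>Pow T. \<Sum>M\<in>Pow (T - S). (-1) ^ card S * \<phi> M)"
    by (simp add: sum_distrib_left)
  also have "\<dots> = (\<Sum>M\<in>Pow T. \<Sum>S\<in>Pow (T - M). (-1) ^ card S * \<phi> M)"
    by (rule swap_sym[OF T])
  also have "\<dots> = (\<Sum>M\<in>Pow T. (if M = T then \<phi> M else 0))"
  proof (intro sum.cong refl)
    fix M assume M: "M \<in> Pow T"
    have "(\<Sum>S\<in>Pow (T - M). (-1) ^ card S * \<phi> M) = (\<Sum>S\<in>Pow (T - M). (-1) ^ card S) * \<phi> M"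
      by (simp add: sum_distrib_right)
    also have "\<dots> = (if M = T then \<phi> M else 0)"
      using M T by (subst alt_pow) auto
    finally show "(\<Sum>S\<in>Pow (T - M). (-1) ^ card S * \<phi> M) = (if M = T then \<phi> M else 0)" .
  qed
  also have "\<dots> = \<phi> T" using T by (simp add: sum.delta')
  finally show ?thesis .
qed

definition wsf :: "(nat \<Rightarrow> complex) \<Rightarrow> nat set \<Rightarrow> nat \<Rightarrow> complex" where
  "wsf s S = s(0 := s 0 * prod s S)"

definition Rf :: "complex \<Rightarrow> (nat \<Rightarrow> complex) \<Rightarrow> nat set \<Rightarrow> complex" where
  "Rf q s I = (\<Sum>S\<in>Pow (I - {0}). (-1) ^ card S * Wl q (wsf s S) (I - S))"

lemma prod_ws:
  assumes "finite K" "finite S" "0 \<notin> S" "S \<inter> K = {}"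
  shows "prod (wsf s S) K = (if 0 \<in> K then prod s (K \<union> S) else prod s K)"
proof (cases "0 \<in> K")
  case True
  have 1: "prod (wsf s S) K = wsf s S 0 * prod (wsf s S) (K - {0})"
    by (rule prod.remove[OF assms(1) True])
  have 2: "prod (wsf s S) (K - {0}) = prod s (K - {0})"
    by (intro prod.cong) (auto simp: wsf_def)
  have 3: "prod s (K \<union> S) = prod s K * prod s S"
    by (rule prod.union_disjoint) (use assms in auto)
  have 4: "prod s K = s 0 * prod s (K - {0})"
    by (rule prod.remove[OF assms(1) True])
  show ?thesis using True unfolding 1 2 3 4 by (simp add: wsf_def mult_ac)
next
  case False
  thus ?thesis by (auto simp: wsf_def intro!: prod.cong)
qed

context
  fixes q qh :: complex and s :: "nat \<Rightarrow> complex" and N :: "nat set"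
  assumes q1: "norm q < 1" and q0: "q \<noteq> 0" and qh: "qh\<^sup>2 = q" and finN: "finite N" and N0: "0 \<in> N"
    and snz: "\<And>i. i \<in> N \<Longrightarrow> s i \<noteq> 0"
    and nzA: "\<And>A. A \<subseteq> N \<Longrightarrow> A \<noteq> {} \<Longrightarrow> theta q (prod s A) \<noteq> 0"
    and nzB: "\<And>A. A \<subseteq> N \<Longrightarrow> A \<noteq> {} \<Longrightarrow> theta q (qh * prod s A) \<noteq> 0"
begin

lemma phi_merged:
  assumes S: "S \<subseteq> N - {0}" and L: "L \<subseteq> N - S"
  shows "(\<Sum>K\<in>Pow L. (-1) ^ card (L - K) * thetaD q (card (L - K)) (prod (wsf s S) K) * Wl q (wsf s S) K) = 0"
proof (rule Wl_phi)
  show "finite L" by (rule finite_subset[OF L]) (use finN in auto)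
  fix K assume K: "K \<subseteq> L" "K \<noteq> {}"
  have "K \<subseteq> N" "S \<subseteq> N" using K L S by auto
  hence fK: "finite K" "finite S" using finN finite_subset by auto
  have d: "0 \<notin> S" "S \<inter> K = {}" using S K L by auto
  have KS: "K \<union> S \<subseteq> N" "K \<union> S \<noteq> {}" using \<open>K \<subseteq> N\<close> \<open>S \<subseteq> N\<close> K by auto
  show "theta q (\<Prod>i\<in>K. wsf s S i) \<noteq> 0"
    using prod_ws[OF fK d, of s] nzA[OF KS] nzA[OF \<open>K \<subseteq> N\<close> K(2)] by auto
qed

lemma step_E3:
  assumes S: "S \<subseteq> N - {0}" and L0: "L0 \<subseteq> N - S - {0}"
  shows "(\<Sum>K0\<in>Pow L0. (-1) ^ card (L0 - K0) * thetaD q (card (L0 - K0)) (prod (wsf s S) (insert 0 K0)) *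
            Wl q (wsf s S) (insert 0 K0)) =
         (\<Sum>K0\<in>Pow L0. (-1) ^ card (L0 - K0) * thetaD q (card (L0 - K0) + 1) (prod s K0) * Wl q s K0)"
proof -
  have fL: "finite L0" by (rule finite_subset[OF L0]) (use finN in auto)
  have z: "0 \<notin> L0" using L0 by auto
  have "0 = (\<Sum>K\<in>Pow (insert 0 L0). (-1) ^ card (insert 0 L0 - K) * thetaD q (card (insert 0 L0 - K)) (prod (wsf s S) K) * Wl q (wsf s S) K)"
    by (rule phi_merged[OF S, symmetric]) (use L0 N0 S in auto)
  also have "\<dots> = (\<Sum>K0\<in>Pow L0. (-1) ^ card (insert 0 L0 - K0) * thetaD q (card (insert 0 L0 - K0)) (prod (wsf s S) K0) * Wl q (wsf s S) K0)
     + (\<Sum>K0\<in>Pow L0. (-1) ^ card (insert 0 L0 - insert 0 K0) * thetaD q (card (insert 0 L0 - insert 0 K0)) (prod (wsf s S) (insert 0 K0)) * Wl q (wsf s S) (insert 0 K0))"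
    by (rule sum_Pow_insert[OF fL z])
  also have "(\<Sum>K0\<in>Pow L0. (-1) ^ card (insert 0 L0 - K0) * thetaD q (card (insert 0 L0 - K0)) (prod (wsf s S) K0) * Wl q (wsf s S) K0)
     = - (\<Sum>K0\<in>Pow L0. (-1) ^ card (L0 - K0) * thetaD q (card (L0 - K0) + 1) (prod s K0) * Wl q s K0)"
    unfolding sum_negf[symmetric]
  proof (intro sum.cong refl)
    fix K0 assume K0: "K0 \<in> Pow L0"
    have fK: "finite K0" using K0 fL finite_subset by auto
    have z0: "0 \<notin> K0" using K0 z by auto
    have "insert 0 L0 - K0 = insert 0 (L0 - K0)" using z0 by auto
    hence c: "card (insert 0 L0 - K0) = card (L0 - K0) + 1" using fL z by simp
    have fS: "finite S" by (rule finite_subset[OF S]) (use finN in auto)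
    have p: "prod (wsf s S) K0 = prod s K0"
      using prod_ws[OF fK fS, of s] S K0 L0 z0 by auto
    have w: "Wl q (wsf s S) K0 = Wl q s K0"
      by (rule Wl_cong) (use z0 in \<open>auto simp: wsf_def\<close>)
    show "(-1) ^ card (insert 0 L0 - K0) * thetaD q (card (insert 0 L0 - K0)) (prod (wsf s S) K0) * Wl q (wsf s S) K0
       = - ((-1) ^ card (L0 - K0) * thetaD q (card (L0 - K0) + 1) (prod s K0) * Wl q s K0)"
      unfolding c p w by simp
  qed
  also have "(\<Sum>K0\<in>Pow L0. (-1) ^ card (insert 0 L0 - insert 0 K0) * thetaD q (card (insert 0 L0 - insert 0 K0)) (prod (wsf s S) (insert 0 K0)) * Wl q (wsf s S) (insert 0 K0))
     = (\<Sum>K0\<in>Pow L0. (-1) ^ card (L0 - K0) * thetaD q (card (L0 - K0)) (prod (wsf s S) (insert 0 K0)) * Wl q (wsf s S) (insert 0 K0))"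
  proof (intro sum.cong refl)
    fix K0 assume K0: "K0 \<in> Pow L0"
    have "insert 0 L0 - insert 0 K0 = L0 - K0" using z by auto
    thus "(-1) ^ card (insert 0 L0 - insert 0 K0) * thetaD q (card (insert 0 L0 - insert 0 K0)) (prod (wsf s S) (insert 0 K0)) * Wl q (wsf s S) (insert 0 K0)
       = (-1) ^ card (L0 - K0) * thetaD q (card (L0 - K0)) (prod (wsf s S) (insert 0 K0)) * Wl q (wsf s S) (insert 0 K0)" by simp
  qed
  finally show ?thesis by (simp add: add_eq_0_iff)
qed

lemma core:
  assumes I: "I \<subseteq> N" "0 \<in> I"
  shows "(\<Sum>K\<in>Pow (I - {0}). (-1) ^ (card (I - {0} - K) + 1) * thetaD q (card (I - {0} - K) + 1) (prod s K) * Wl q s K)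
   + (\<Sum>A0\<in>Pow (I - {0}). \<Sum>J\<in>Pow (I - {0} - A0). (-1) ^ card J * thetaD q (card J) (prod s (insert 0 A0)) * Rf q s (insert 0 A0)) = 0"
proof -
  define I0 where "I0 = I - {0}"
  have fI0: "finite I0" unfolding I0_def by (rule finite_subset[of _ N]) (use I finN in auto)
  have I0N: "I0 \<subseteq> N - {0}" using I by (auto simp: I0_def)
  define M where "M = (\<lambda>(K0::nat set) (M0::nat set). (-1) ^ card M0 * thetaD q (card M0 + 1) (prod s K0) * Wl q s K0)"
  have E0: "(\<Sum>A0\<in>Pow I0. \<Sum>J\<in>Pow (I0 - A0). (-1) ^ card J * thetaD q (card J) (prod s (insert 0 A0)) * Rf q s (insert 0 A0))
     = (\<Sum>A0\<in>Pow I0. \<Sum>S\<in>Pow A0. (-1) ^ card S * (\<Sum>J\<in>Pow (I0 - A0). (-1) ^ card J * thetaD q (card J) (prod s (insert 0 A0)) * Wl q (wsf s S) (insert 0 (A0 - S))))"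
  proof (rule sum.cong[OF refl])
    fix A0 assume A0: "A0 \<in> Pow I0"
    have z: "0 \<notin> A0" using A0 by (auto simp: I0_def)
    have R: "Rf q s (insert 0 A0) = (\<Sum>S\<in>Pow A0. (-1) ^ card S * Wl q (wsf s S) (insert 0 (A0 - S)))"
    proof -
      have "insert 0 A0 - {0} = A0" using z by auto
      moreover have "insert 0 A0 - S = insert 0 (A0 - S)" if "S \<in> Pow A0" for S using that z by auto
      ultimately show ?thesis unfolding Rf_def by (intro sum.cong) auto
    qed
    show "(\<Sum>J\<in>Pow (I0 - A0). (-1) ^ card J * thetaD q (card J) (prod s (insert 0 A0)) * Rf q s (insert 0 A0))
      = (\<Sum>S\<in>Pow A0. (-1) ^ card S * (\<Sum>J\<in>Pow (I0 - A0). (-1) ^ card J * thetaD q (card J) (prod s (insert 0 A0)) * Wl q (wsf s S) (insert 0 (A0 - S))))"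
      unfolding R sum_distrib_left sum_distrib_right
      by (subst sum.swap) (simp add: mult_ac)
  qed
  also have "\<dots> = (\<Sum>S\<in>Pow I0. \<Sum>K0\<in>Pow (I0 - S). (-1) ^ card S * (\<Sum>J\<in>Pow (I0 - S - K0). (-1) ^ card J * thetaD q (card J) (prod (wsf s S) (insert 0 K0)) * Wl q (wsf s S) (insert 0 K0)))"
  proof -
    have "(\<Sum>A0\<in>Pow I0. \<Sum>S\<in>Pow A0. (-1) ^ card S * (\<Sum>J\<in>Pow (I0 - A0). (-1) ^ card J * thetaD q (card J) (prod s (insert 0 A0)) * Wl q (wsf s S) (insert 0 (A0 - S))))
      = (\<Sum>A0\<in>Pow I0. \<Sum>S\<in>Pow A0. (\<lambda>S K0. (-1) ^ card S * (\<Sum>J\<in>Pow (I0 - S - K0). (-1) ^ card J * thetaD q (card J) (prod (wsf s S) (insert 0 K0)) * Wl q (wsf s S) (insert 0 K0))) S (A0 - S))"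
    proof (rule sum.cong[OF refl], rule sum.cong[OF refl])
      fix A0 S assume A0: "A0 \<in> Pow I0" and S: "S \<in> Pow A0"
      have fA0: "finite A0" by (rule finite_subset[of A0 I0]) (use A0 fI0 in auto)
      have fin: "finite (insert 0 (A0 - S))" "finite S"
        using fA0 apply simp
        by (rule finite_subset[of S A0]) (use S fA0 in auto)
      have "prod (wsf s S) (insert 0 (A0 - S)) = prod s (insert 0 (A0 - S) \<union> S)"
        using prod_ws[OF fin, of s] A0 S by (auto simp: I0_def)
      also have "insert 0 (A0 - S) \<union> S = insert 0 A0" using S by auto
      finally have p: "prod (wsf s S) (insert 0 (A0 - S)) = prod s (insert 0 A0)" .
      have d: "I0 - S - (A0 - S) = I0 - A0" using A0 S by auto
      show "(-1) ^ card S * (\<Sum>J\<in>Pow (I0 - A0). (-1) ^ card J * thetaD q (card J) (prod s (insert 0 A0)) * Wl q (wsf s S) (insert 0 (A0 - S)))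
        = (\<lambda>S K0. (-1) ^ card S * (\<Sum>J\<in>Pow (I0 - S - K0). (-1) ^ card J * thetaD q (card J) (prod (wsf s S) (insert 0 K0)) * Wl q (wsf s S) (insert 0 K0))) S (A0 - S)"
        unfolding d p by simp
    qed
    also have "\<dots> = (\<Sum>S\<in>Pow I0. \<Sum>K0\<in>Pow (I0 - S). (-1) ^ card S * (\<Sum>J\<in>Pow (I0 - S - K0). (-1) ^ card J * thetaD q (card J) (prod (wsf s S) (insert 0 K0)) * Wl q (wsf s S) (insert 0 K0)))"
      by (rule swap_pow[OF fI0])
    finally show ?thesis .
  qed
  also have "\<dots> = (\<Sum>S\<in>Pow I0. (-1) ^ card S * (\<Sum>L0\<in>Pow (I0 - S). \<Sum>K0\<in>Pow L0. (-1) ^ card (L0 - K0) * thetaD q (card (L0 - K0)) (prod (wsf s S) (insert 0 K0)) * Wl q (wsf s S) (insert 0 K0)))"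
  proof (rule sum.cong[OF refl])
    fix S assume S: "S \<in> Pow I0"
    have fX: "finite (I0 - S)" using fI0 by simp
    have "(\<Sum>L0\<in>Pow (I0 - S). \<Sum>K0\<in>Pow L0. (\<lambda>K0 J. (-1) ^ card J * thetaD q (card J) (prod (wsf s S) (insert 0 K0)) * Wl q (wsf s S) (insert 0 K0)) K0 (L0 - K0))
       = (\<Sum>K0\<in>Pow (I0 - S). \<Sum>J\<in>Pow (I0 - S - K0). (\<lambda>K0 J. (-1) ^ card J * thetaD q (card J) (prod (wsf s S) (insert 0 K0)) * Wl q (wsf s S) (insert 0 K0)) K0 J)"
      by (rule swap_pow[OF fX])
    thus "(\<Sum>K0\<in>Pow (I0 - S). (-1) ^ card S * (\<Sum>J\<in>Pow (I0 - S - K0). (-1) ^ card J * thetaD q (card J) (prod (wsf s S) (insert 0 K0)) * Wl q (wsf s S) (insert 0 K0)))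
      = (-1) ^ card S * (\<Sum>L0\<in>Pow (I0 - S). \<Sum>K0\<in>Pow L0. (-1) ^ card (L0 - K0) * thetaD q (card (L0 - K0)) (prod (wsf s S) (insert 0 K0)) * Wl q (wsf s S) (insert 0 K0))"
      by (simp add: sum_distrib_left)
  qed
  also have "\<dots> = (\<Sum>S\<in>Pow I0. (-1) ^ card S * (\<Sum>L0\<in>Pow (I0 - S). \<Sum>K0\<in>Pow L0. M K0 (L0 - K0)))"
  proof (rule sum.cong[OF refl], rule arg_cong2[where f = "(*)", OF refl], rule sum.cong[OF refl])
    fix S L0 assume S: "S \<in> Pow I0" and L0: "L0 \<in> Pow (I0 - S)"
    show "(\<Sum>K0\<in>Pow L0. (-1) ^ card (L0 - K0) * thetaD q (card (L0 - K0)) (prod (wsf s S) (insert 0 K0)) * Wl q (wsf s S) (insert 0 K0))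
      = (\<Sum>K0\<in>Pow L0. M K0 (L0 - K0))"
      unfolding M_def by (rule step_E3) (use S L0 I0N in auto)
  qed
  also have "\<dots> = (\<Sum>S\<in>Pow I0. \<Sum>K0\<in>Pow (I0 - S). (-1) ^ card S * (\<Sum>M0\<in>Pow (I0 - K0 - S). M K0 M0))"
  proof (rule sum.cong[OF refl])
    fix S assume S: "S \<in> Pow I0"
    have "(\<Sum>L0\<in>Pow (I0 - S). \<Sum>K0\<in>Pow L0. M K0 (L0 - K0)) = (\<Sum>K0\<in>Pow (I0 - S). \<Sum>M0\<in>Pow (I0 - S - K0). M K0 M0)"
      by (rule swap_pow) (use fI0 in simp)
    moreover have "I0 - S - K0 = I0 - K0 - S" for K0 by auto
    ultimately show "(-1) ^ card S * (\<Sum>L0\<in>Pow (I0 - S). \<Sum>K0\<in>Pow L0. M K0 (L0 - K0)) =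
       (\<Sum>K0\<in>Pow (I0 - S). (-1) ^ card S * (\<Sum>M0\<in>Pow (I0 - K0 - S). M K0 M0))"
      by (simp add: sum_distrib_left)
  qed
  also have "\<dots> = (\<Sum>K0\<in>Pow I0. \<Sum>S\<in>Pow (I0 - K0). (-1) ^ card S * (\<Sum>M0\<in>Pow (I0 - K0 - S). M K0 M0))"
    by (rule swap_sym[OF fI0])
  also have "\<dots> = (\<Sum>K0\<in>Pow I0. M K0 (I0 - K0))"
    by (rule sum.cong[OF refl], rule alt_collapse) (use fI0 in simp)
  finally have S2: "(\<Sum>A0\<in>Pow I0. \<Sum>J\<in>Pow (I0 - A0). (-1) ^ card J * thetaD q (card J) (prod s (insert 0 A0)) * Rf q s (insert 0 A0))
      = (\<Sum>K0\<in>Pow I0. M K0 (I0 - K0))" .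
  show ?thesis
    unfolding I0_def[symmetric] S2 sum.distrib[symmetric] M_def
    by (intro sum.neutral ballI) simp
qed

lemma prod_shift0:
  assumes "finite A" "0 \<in> A"
  shows "prod (s(0 := qh * s 0)) A = qh * prod s A"
proof -
  have "prod (s(0 := qh * s 0)) A = (s(0 := qh * s 0)) 0 * prod (s(0 := qh * s 0)) (A - {0})"
    by (rule prod.remove[OF assms])
  also have "prod (s(0 := qh * s 0)) (A - {0}) = prod s (A - {0})" by (intro prod.cong) auto
  also have "prod s A = s 0 * prod s (A - {0})" by (rule prod.remove[OF assms])
  ultimately show ?thesis by simp
qed

lemma prod_s_nz: "A \<subseteq> N \<Longrightarrow> prod s A \<noteq> 0"
  using snz finN by (subst prod_zero_iff) (auto intro: finite_subset)

lemma quasi_use: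
  assumes X: "finite X" and t: "t \<noteq> 0"
  shows "(-1) ^ card X * thetaD q (card X) (qh * t) * (- (qh * t\<^sup>2) * R) =
         (\<Sum>J\<in>Pow X. (-1) ^ card J * thetaD q (card J) t * R)"
proof -
  have qh0: "qh \<noteq> 0" using qh q0 by auto
  have "thetaD q (card X) (qh * t) = - (1 / (qh * t\<^sup>2)) * ((-1) ^ card X * (\<Sum>J\<in>Pow X. (-1) ^ card J * thetaD q (card J) t))"
    using thetaD_quasi[OF q1 qh q0 X] t by blast
  hence "(-1) ^ card X * thetaD q (card X) (qh * t) * (- (qh * t\<^sup>2) * R) =
     ((-1) ^ card X * (-1) ^ card X) * (\<Sum>J\<in>Pow X. (-1) ^ card J * thetaD q (card J) t) * R"
    using qh0 t by (simp add: field_simps)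
  also have "(-1) ^ card X * (-1) ^ card X = (1::complex)"
    by (simp add: power_add[symmetric] flip: mult_2)
  finally show ?thesis by (simp add: sum_distrib_right)
qed

lemma main_rec:
  assumes "I \<subseteq> N" "0 \<in> I"
  shows "Wl q (s(0 := qh * s 0)) I = - (qh * (prod s I)\<^sup>2) * Rf q s I"
  using assms
proof (induction "card I" arbitrary: I rule: less_induct)
  case less
  define w' where "w' = s(0 := qh * s 0)"
  define I0 where "I0 = I - {0}"
  have IN: "I \<subseteq> N" and I0in: "0 \<in> I" using less.prems by auto
  have fI: "finite I" by (rule finite_subset[OF IN finN])
  have fI0: "finite I0" using fI by (simp add: I0_def)
  have Ieq: "I = insert 0 I0" using I0in by (auto simp: I0_def)
  have z: "0 \<notin> I0" by (simp add: I0_def)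
  define Y where "Y = (\<lambda>A0. - (qh * (prod s (insert 0 A0))\<^sup>2) * Rf q s (insert 0 A0))"
  define G where "G = (\<lambda>A0. (-1) ^ card (I0 - A0) * thetaD q (card (I0 - A0)) (qh * prod s (insert 0 A0)) *
        (Wl q w' (insert 0 A0) - Y A0))"
  define S1 where "S1 = (\<Sum>K\<in>Pow I0. (-1) ^ (card (I0 - K) + 1) * thetaD q (card (I0 - K) + 1) (prod s K) * Wl q s K)"
  have phi: "(\<Sum>A\<in>Pow I. (-1) ^ card (I - A) * thetaD q (card (I - A)) (prod w' A) * Wl q w' A) = 0"
  proof (rule Wl_phi[OF fI])
    fix A assume A: "A \<subseteq> I" "A \<noteq> {}"
    have fA: "finite A" using A fI finite_subset by auto
    have AN: "A \<subseteq> N" using A IN by auto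
    show "theta q (\<Prod>i\<in>A. w' i) \<noteq> 0"
    proof (cases "0 \<in> A")
      case True thus ?thesis using prod_shift0[OF fA True] nzB[OF AN A(2)] by (simp add: w'_def)
    next
      case False
      hence "prod w' A = prod s A" by (auto simp: w'_def intro!: prod.cong)
      thus ?thesis using nzA[OF AN A(2)] by simp
    qed
  qed
  have P1: "(\<Sum>K\<in>Pow I0. (-1) ^ card (I - K) * thetaD q (card (I - K)) (prod w' K) * Wl q w' K) = S1"
    unfolding S1_def
  proof (rule sum.cong[OF refl])
    fix K assume K: "K \<in> Pow I0"
    have zK: "0 \<notin> K" using K z by auto
    have "I - K = insert 0 (I0 - K)" using Ieq zK by auto
    hence c: "card (I - K) = card (I0 - K) + 1" using fI0 z by simp
    have p: "prod w' K = prod s K" using zK by (auto simp: w'_def intro!: prod.cong)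
    have w: "Wl q w' K = Wl q s K" by (rule Wl_cong) (use zK in \<open>auto simp: w'_def\<close>)
    show "(-1) ^ card (I - K) * thetaD q (card (I - K)) (prod w' K) * Wl q w' K =
      (-1) ^ (card (I0 - K) + 1) * thetaD q (card (I0 - K) + 1) (prod s K) * Wl q s K"
      unfolding c p w ..
  qed
  have P2: "(\<Sum>A0\<in>Pow I0. (-1) ^ card (I - insert 0 A0) * thetaD q (card (I - insert 0 A0)) (prod w' (insert 0 A0)) * Wl q w' (insert 0 A0))
     = (\<Sum>A0\<in>Pow I0. (-1) ^ card (I0 - A0) * thetaD q (card (I0 - A0)) (qh * prod s (insert 0 A0)) * Wl q w' (insert 0 A0))"
  proof (rule sum.cong[OF refl])
    fix A0 assume A0: "A0 \<in> Pow I0"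
    have "I - insert 0 A0 = I0 - A0" using Ieq z by auto
    moreover have "prod w' (insert 0 A0) = qh * prod s (insert 0 A0)"
      unfolding w'_def by (rule prod_shift0) (use A0 fI0 finite_subset in auto)
    ultimately show "(-1) ^ card (I - insert 0 A0) * thetaD q (card (I - insert 0 A0)) (prod w' (insert 0 A0)) * Wl q w' (insert 0 A0)
       = (-1) ^ card (I0 - A0) * thetaD q (card (I0 - A0)) (qh * prod s (insert 0 A0)) * Wl q w' (insert 0 A0)" by simp
  qed
  have phi': "S1 + (\<Sum>A0\<in>Pow I0. (-1) ^ card (I0 - A0) * thetaD q (card (I0 - A0)) (qh * prod s (insert 0 A0)) * Wl q w' (insert 0 A0)) = 0"
  proof -
    have split: "(\<Sum>A\<in>Pow I. f A) = (\<Sum>K\<in>Pow I0. f K) + (\<Sum>A0\<in>Pow I0. f (insert 0 A0))" for f :: "nat set \<Rightarrow> complex"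
      by (subst Ieq) (rule sum_Pow_insert[OF fI0 z])
    show ?thesis using phi unfolding split P1 P2 .
  qed
  have coreq: "S1 + (\<Sum>A0\<in>Pow I0. (-1) ^ card (I0 - A0) * thetaD q (card (I0 - A0)) (qh * prod s (insert 0 A0)) * Y A0) = 0"
  proof -
    have "(\<Sum>A0\<in>Pow I0. (-1) ^ card (I0 - A0) * thetaD q (card (I0 - A0)) (qh * prod s (insert 0 A0)) * Y A0)
      = (\<Sum>A0\<in>Pow I0. \<Sum>J\<in>Pow (I0 - A0). (-1) ^ card J * thetaD q (card J) (prod s (insert 0 A0)) * Rf q s (insert 0 A0))"
    proof (rule sum.cong[OF refl])
      fix A0 assume A0: "A0 \<in> Pow I0"
      have "prod s (insert 0 A0) \<noteq> 0" by (rule prod_s_nz) (use A0 IN I0in in \<open>auto simp: I0_def\<close>)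
      thus "(-1) ^ card (I0 - A0) * thetaD q (card (I0 - A0)) (qh * prod s (insert 0 A0)) * Y A0 =
        (\<Sum>J\<in>Pow (I0 - A0). (-1) ^ card J * thetaD q (card J) (prod s (insert 0 A0)) * Rf q s (insert 0 A0))"
        unfolding Y_def by (intro quasi_use) (use fI0 in auto)
    qed
    thus ?thesis using core[OF IN I0in] unfolding S1_def I0_def by simp
  qed
  have sumG: "(\<Sum>A0\<in>Pow I0. G A0) = 0"
  proof -
    have "(\<Sum>A0\<in>Pow I0. G A0) = (S1 + (\<Sum>A0\<in>Pow I0. (-1) ^ card (I0 - A0) * thetaD q (card (I0 - A0)) (qh * prod s (insert 0 A0)) * Wl q w' (insert 0 A0)))
       - (S1 + (\<Sum>A0\<in>Pow I0. (-1) ^ card (I0 - A0) * thetaD q (card (I0 - A0)) (qh * prod s (insert 0 A0)) * Y A0))"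
      unfolding G_def by (simp add: sum_subtractf[symmetric] algebra_simps)
    thus ?thesis using phi' coreq by simp
  qed
  have G0: "G A0 = 0" if A0: "A0 \<in> Pow I0 - {I0}" for A0
  proof -
    have a: "A0 \<subseteq> I0" "A0 \<noteq> I0" using A0 by auto
    then obtain x where x: "x \<in> I0" "x \<notin> A0" by blast
    have "insert 0 A0 \<subset> I"
    proof
      show "insert 0 A0 \<subseteq> I" using a Ieq by auto
      show "insert 0 A0 \<noteq> I"
      proof
        assume e: "insert 0 A0 = I"
        have "x \<in> I" using x Ieq by auto
        hence "x \<in> insert 0 A0" using e by simp
        moreover have "x \<noteq> 0" using x(1) z by metis
        ultimately show False using x by simp
      qed
    qed
    hence "card (insert 0 A0) < card I" using fI by (rule psubset_card_mono[rotated])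
    moreover have "insert 0 A0 \<subseteq> N" using A0 IN I0in by (auto simp: I0_def)
    ultimately have "Wl q w' (insert 0 A0) = Y A0"
      unfolding w'_def Y_def using less.hyps by blast
    thus ?thesis by (simp add: G_def)
  qed
  have "(\<Sum>A0\<in>Pow I0. G A0) = G I0 + (\<Sum>A0\<in>Pow I0 - {I0}. G A0)"
    by (rule sum.remove) (use fI0 in auto)
  hence "G I0 = 0" using sumG G0 by simp
  hence "theta q (qh * prod s I) * (Wl q w' I - Y I0) = 0"
    unfolding G_def using Ieq by (simp add: thetaD_0)
  moreover have "theta q (qh * prod s I) \<noteq> 0" by (rule nzB[OF IN]) (use I0in in auto)
  ultimately have "Wl q w' I = Y I0" by simp
  thus ?case unfolding w'_def Y_def using Ieq by simp
qed

end

lemma U_map_distinct: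
  assumes L: "distinct L"
  shows "U q (map g L) = Wl q g (set L)"
proof -
  let ?n = "length L"
  have "U q (map g L) = Wl q (\<lambda>i. map g L ! i) {..<?n}" by (simp add: U_eq_Wl)
  also have "\<dots> = (\<Sum>ys\<in>permutations_of_set {..<?n}. FL q (map g (map ((!) L) ys)))"
    unfolding Wl_def
  proof (rule sum.cong[OF refl])
    fix ys assume "ys \<in> permutations_of_set {..<?n}"
    hence st: "set ys = {..<?n}" by (rule permutations_of_setD)
    have e: "map (\<lambda>i. map g L ! i) ys = map g (map ((!) L) ys)"
      unfolding map_map by (rule map_cong[OF refl]) (use st in auto)
    show "FL q (map (\<lambda>i. map g L ! i) ys) = FL q (map g (map ((!) L) ys))" by (simp only: e)
  qed
  also have "\<dots> = (\<Sum>zs\<in>map ((!) L) ` permutations_of_set {..<?n}. FL q (map g zs))"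
  proof (rule sum.reindex[symmetric, unfolded o_def])
    have inj: "inj_on ((!) L) {..<?n}" using L by (simp add: inj_on_def nth_eq_iff_index_eq)
    show "inj_on (map ((!) L)) (permutations_of_set {..<?n})"
    proof (rule inj_onI)
      fix xs ys assume xs: "xs \<in> permutations_of_set {..<?n}" and ys: "ys \<in> permutations_of_set {..<?n}"
        and e: "map ((!) L) xs = map ((!) L) ys"
      have "set xs = {..<?n}" "set ys = {..<?n}"
        using permutations_of_setD(1)[OF xs] permutations_of_setD(1)[OF ys] by auto
      hence "set xs \<union> set ys \<subseteq> {..<?n}" by simp
      hence "inj_on ((!) L) (set xs \<union> set ys)" using inj inj_on_subset by blast
      thus "xs = ys" using e inj_on_map_eq_map by blast
    qed
  qed
  also have "map ((!) L) ` permutations_of_set {..<?n} = permutations_of_set (set L)"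
  proof -
    have inj: "inj_on ((!) L) {..<?n}" using L by (simp add: inj_on_def nth_eq_iff_index_eq)
    have "(!) L ` {..<?n} = set L" by (auto simp: in_set_conv_nth)
    thus ?thesis using permutations_of_set_image_inj[OF inj] by simp
  qed
  finally show ?thesis unfolding Wl_def .
qed

definition PS :: "nat \<Rightarrow> nat set \<Rightarrow> nat set set" where
  "PS n S = insert (insert 0 S) ((\<lambda>i. {i}) ` ({..<n} - insert 0 S))"

lemma PS_in:
  assumes n: "n \<ge> 1" and S: "S \<subseteq> {..<n} - {0}"
  shows "PS n S \<in> Pi0 n"
proof -
  have fS: "finite S" using S finite_subset by blast
  have "partition_on {..<n} (PS n S)"
    unfolding partition_on_def
  proof (intro conjI)
    show "\<Union>(PS n S) = {..<n}"
    proof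
      show "\<Union>(PS n S) \<subseteq> {..<n}" using S n unfolding PS_def by auto
      show "{..<n} \<subseteq> \<Union>(PS n S)" unfolding PS_def by auto
    qed
    show "{} \<notin> PS n S" unfolding PS_def by auto
    show "disjoint (PS n S)"
      unfolding disjoint_def
    proof (intro ballI impI)
      fix A B assume A: "A \<in> PS n S" and B: "B \<in> PS n S" and AB: "A \<noteq> B"
      show "A \<inter> B = {}"
      proof (cases "A = insert 0 S")
        case True
        then obtain j where "B = {j}" "j \<notin> insert 0 S" using B AB unfolding PS_def by auto
        thus ?thesis using True by auto
      next
        case False
        then obtain i where i: "A = {i}" "i \<notin> insert 0 S" using A unfolding PS_def by auto
        show ?thesis
        proof (cases "B = insert 0 S")
          case True thus ?thesis using i by auto
        next
          case False
          then obtain j where "B = {j}" using B unfolding PS_def by auto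
          thus ?thesis using i AB by auto
        qed
      qed
    qed
  qed
  moreover have "\<forall>B\<in>PS n S. \<forall>C\<in>PS n S. card B > 1 \<and> card C > 1 \<longrightarrow> B = C"
    unfolding PS_def by auto
  moreover have "\<forall>B\<in>PS n S. card B > 1 \<longrightarrow> 0 \<in> B"
    unfolding PS_def by auto
  ultimately show ?thesis by (simp add: Pi0_def)
qed

definition blk0 :: "nat set set \<Rightarrow> nat set" where
  "blk0 P = \<Union>{B \<in> P. 0 \<in> B} - {0}"

lemma blk0_PS:
  assumes S: "S \<subseteq> {..<n} - {0}"
  shows "blk0 (PS n S) = S"
proof -
  have "{B \<in> PS n S. 0 \<in> B} = {insert 0 S}" unfolding PS_def by auto
  thus ?thesis using S by (auto simp: blk0_def)
qed

lemma PS_blk0: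
  assumes n: "n \<ge> 1" and P: "P \<in> Pi0 n"
  shows "blk0 P \<subseteq> {..<n} - {0}" "PS n (blk0 P) = P"
proof -
  have part: "partition_on {..<n} P" and one: "\<And>B. B \<in> P \<Longrightarrow> card B > 1 \<Longrightarrow> 0 \<in> B"
    using P by (auto simp: Pi0_def)
  have U: "\<Union>P = {..<n}" and dis: "\<And>A B. A \<in> P \<Longrightarrow> B \<in> P \<Longrightarrow> A \<noteq> B \<Longrightarrow> A \<inter> B = {}"
    and ne: "{} \<notin> P"
    using part by (auto simp: partition_on_def disjoint_def)
  have "(0::nat) \<in> \<Union>P" using U n by auto
  then obtain B0 where B0: "B0 \<in> P" "0 \<in> B0" by blast
  have uniq: "B = B0" if "B \<in> P" "0 \<in> B" for B
  proof (rule ccontr)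
    assume "B \<noteq> B0"
    hence "B \<inter> B0 = {}" by (rule dis[OF that(1) B0(1)])
    thus False using that B0 by blast
  qed
  have bl: "blk0 P = B0 - {0}" unfolding blk0_def using uniq B0 by blast
  have ins: "insert 0 (blk0 P) = B0" using bl B0 by auto
  have B0n: "B0 \<subseteq> {..<n}" using B0 U by blast
  show "blk0 P \<subseteq> {..<n} - {0}" using bl B0n by auto
  have single: "\<exists>i. B = {i}" if "B \<in> P" "0 \<notin> B" for B
  proof -
    have "B \<subseteq> {..<n}" using that U by blast
    hence "finite B" using finite_subset by blast
    moreover have "B \<noteq> {}" using that ne by auto
    moreover have "\<not> card B > 1" using one that by blast
    moreover have "card B > 0" using \<open>finite B\<close> \<open>B \<noteq> {}\<close> by (simp add: card_gt_0_iff)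
    ultimately have "card B = 1" by linarith
    then obtain i where "B = {i}" by (rule card_1_singletonE)
    thus ?thesis by blast
  qed
  show "PS n (blk0 P) = P"
  proof
    show "PS n (blk0 P) \<subseteq> P"
    proof
      fix B assume "B \<in> PS n (blk0 P)"
      hence "B = B0 \<or> (\<exists>i. i < n \<and> i \<notin> B0 \<and> B = {i})" unfolding PS_def ins by auto
      thus "B \<in> P"
      proof
        assume "\<exists>i. i < n \<and> i \<notin> B0 \<and> B = {i}"
        then obtain i where i: "i < n" "i \<notin> B0" "B = {i}" by blast
        then obtain C where C: "C \<in> P" "i \<in> C" using U by blast
        have "0 \<notin> C" using uniq[OF C(1)] C i by auto
        then obtain j where "C = {j}" using single[OF C(1)] by blast
        thus "B \<in> P" using C i by auto
      qed (use B0 in simp)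
    qed
  next
    show "P \<subseteq> PS n (blk0 P)"
    proof
      fix B assume B: "B \<in> P"
      show "B \<in> PS n (blk0 P)"
      proof (cases "0 \<in> B")
        case True thus ?thesis using uniq[OF B] unfolding PS_def ins by auto
      next
        case False
        then obtain i where i: "B = {i}" using single[OF B] by blast
        have "i < n" using B i U by blast
        moreover have "i \<notin> B0" using dis[OF B B0(1)] i False B0 by auto
        ultimately show ?thesis unfolding PS_def ins i by auto
      qed
    qed
  qed
qed

lemma card_PS:
  assumes n: "n \<ge> 1" and S: "S \<subseteq> {..<n} - {0}"
  shows "card (PS n S) = n - card S"
proof -
  have fS: "finite S" using S finite_subset by blast
  have notin: "insert 0 S \<notin> (\<lambda>i. {i}) ` ({..<n} - insert 0 S)" by auto
  have "card ((\<lambda>i. {i}) ` ({..<n} - insert 0 S)) = card ({..<n} - insert 0 S)"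
    by (rule card_image) (simp add: inj_on_def)
  also have "\<dots> = n - card (insert 0 S)"
    using S n by (subst card_Diff_subset) (auto intro: finite_subset)
  also have "card (insert 0 S) = Suc (card S)" using S fS by (subst card_insert_disjoint) auto
  finally have c: "card ((\<lambda>i. {i}) ` ({..<n} - insert 0 S)) = n - Suc (card S)" .
  have "card S < n"
  proof -
    have "insert 0 S \<subseteq> {..<n}" using S n by auto
    hence "card (insert 0 S) \<le> n" using card_mono[of "{..<n}" "insert 0 S"] by simp
    moreover have "card (insert 0 S) = Suc (card S)" using S fS by (subst card_insert_disjoint) auto
    ultimately show ?thesis by simp
  qed
  thus ?thesis unfolding PS_def using notin c by (simp add: card_insert_if)
qed

lemma Upi_PS:
  assumes n: "n \<ge> 1" and S: "S \<subseteq> {..<n} - {0}"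
  shows "Upi q (PS n S) s = Wl q (wsf s S) ({..<n} - S)"
proof -
  have fS: "finite S" using S finite_subset by blast
  have M0: "Min (insert 0 S) = (0::nat)" by (rule Min_eqI) (use fS in auto)
  have MinI: "Min ` PS n S = {..<n} - S"
  proof -
    have "Min ` PS n S = insert (Min (insert 0 S)) ((\<lambda>i. Min {i}) ` ({..<n} - insert 0 S))"
      unfolding PS_def by (simp add: image_image)
    also have "\<dots> = insert 0 ({..<n} - insert 0 S)" unfolding M0 by simp
    also have "\<dots> = {..<n} - S" using S n by auto
    finally show ?thesis .
  qed
  have THE_eq: "(THE B. B \<in> PS n S \<and> Min B = m) = (if m = 0 then insert 0 S else {m})"
    if m: "m \<in> {..<n} - S" for m
  proof (rule the_equality)
    show "(if m = 0 then insert 0 S else {m}) \<in> PS n S \<and> Min (if m = 0 then insert 0 S else {m}) = m"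
      using m M0 unfolding PS_def by auto
    fix B assume B: "B \<in> PS n S \<and> Min B = m"
    show "B = (if m = 0 then insert 0 S else {m})"
    proof (cases "B = insert 0 S")
      case True thus ?thesis using B M0 by auto
    next
      case False
      then obtain i where "B = {i}" "i \<notin> insert 0 S" using B unfolding PS_def by auto
      thus ?thesis using B by auto
    qed
  qed
  have g: "(\<Prod>k\<in>(THE B. B \<in> PS n S \<and> Min B = m). s k) = wsf s S m" if m: "m \<in> {..<n} - S" for m
  proof (cases "m = 0")
    case True
    have "0 \<notin> S" using S by auto
    thus ?thesis using True THE_eq[OF m] fS by (simp add: wsf_def)
  next
    case False
    thus ?thesis using THE_eq[OF m] by (simp add: wsf_def)
  qed
  have fX: "finite ({..<n} - S)" by simp
  have "Upi q (PS n S) s = U q (map (wsf s S) (sorted_list_of_set ({..<n} - S)))"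
    unfolding Upi_def MinI
    by (rule arg_cong[where f = "U q"], rule map_cong[OF refl]) (use g fX in simp)
  also have "\<dots> = Wl q (wsf s S) ({..<n} - S)"
    by (subst U_map_distinct) (use fX in auto)
  finally show ?thesis .
qed

lemma sum_Pi0:
  assumes n: "n \<ge> 1"
  shows "(\<Sum>P\<in>Pi0 n. (-1) ^ (n + card P) * Upi q P s) = Rf q s {..<n}"
  unfolding Rf_def
proof (rule sum.reindex_bij_witness[where i = "PS n" and j = blk0])
  fix P assume P: "P \<in> Pi0 n"
  show "PS n (blk0 P) = P" by (rule PS_blk0(2)[OF n P])
  show "blk0 P \<in> Pow ({..<n} - {0})" using PS_blk0(1)[OF n P] by simp
  have S: "blk0 P \<subseteq> {..<n} - {0}" by (rule PS_blk0(1)[OF n P])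
  have fS: "finite (blk0 P)" using S finite_subset by blast
  have cS: "card (blk0 P) < n"
  proof -
    have "insert 0 (blk0 P) \<subseteq> {..<n}" using S n by auto
    hence "card (insert 0 (blk0 P)) \<le> n" using card_mono[of "{..<n}"] by simp
    moreover have "card (insert 0 (blk0 P)) = Suc (card (blk0 P))" using S fS by (subst card_insert_disjoint) auto
    ultimately show ?thesis by simp
  qed
  have "(-1) ^ (n + card P) = ((-1) ^ card (blk0 P) :: complex)"
  proof -
    have "card P = n - card (blk0 P)" using card_PS[OF n S] PS_blk0(2)[OF n P] by simp
    hence "n + card P = 2 * (n - card (blk0 P)) + card (blk0 P)" using cS by simp
    thus ?thesis by (simp add: power_add power_mult)
  qed
  moreover have "Upi q P s = Wl q (wsf s (blk0 P)) ({..<n} - blk0 P)"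
    using Upi_PS[OF n S, of q s] PS_blk0(2)[OF n P] by simp
  ultimately show "(-1) ^ card (blk0 P) * Wl q (wsf s (blk0 P)) ({..<n} - blk0 P) = (-1) ^ (n + card P) * Upi q P s"
    by simp
next
  fix S assume S: "S \<in> Pow ({..<n} - {0})"
  show "blk0 (PS n S) = S" by (rule blk0_PS) (use S in auto)
  show "PS n S \<in> Pi0 n" by (rule PS_in[OF n]) (use S in auto)
qed

theorem corollary10p3:
  fixes q qh :: complex and n :: nat and s :: "nat \<Rightarrow> complex"
  assumes "q \<noteq> 0" and "norm q < 1" and "qh\<^sup>2 = q"
    and "n \<ge> 1"
    and "\<forall>i<n. s i \<noteq> 0"
    and "\<forall>S. S \<subseteq> {..<n} \<and> S \<noteq> {} \<longrightarrow>
           theta q (\<Prod>k\<in>S. s k) \<noteq> 0 \<and> theta q (qh * (\<Prod>k\<in>S. s k)) \<noteq> 0"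
  shows "U q (map (\<lambda>i. if i = 0 then qh * s i else s i) [0..<n]) =
         - qh * (\<Prod>i<n. (s i)\<^sup>2) *
           (\<Sum>P\<in>Pi0 n. (-1) ^ (n + card P) * Upi q P s)"
proof -
  note q0 = assms(1) and q1 = assms(2) and qh = assms(3) and n = assms(4)
  have snz: "\<And>i. i \<in> {..<n} \<Longrightarrow> s i \<noteq> 0" using assms(5) by auto
  have nzA: "\<And>A. A \<subseteq> {..<n} \<Longrightarrow> A \<noteq> {} \<Longrightarrow> theta q (prod s A) \<noteq> 0" using assms(6) by auto
  have nzB: "\<And>A. A \<subseteq> {..<n} \<Longrightarrow> A \<noteq> {} \<Longrightarrow> theta q (qh * prod s A) \<noteq> 0" using assms(6) by auto
  have N0: "0 \<in> {..<n}" using n by simp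
  have "U q (map (\<lambda>i. if i = 0 then qh * s i else s i) [0..<n]) =
        Wl q (\<lambda>i. if i = 0 then qh * s i else s i) {..<n}"
    by (subst U_map_distinct) (auto simp: atLeast0LessThan)
  also have "\<dots> = Wl q (s(0 := qh * s 0)) {..<n}"
    by (rule Wl_cong) simp
  also have "\<dots> = - (qh * (prod s {..<n})\<^sup>2) * Rf q s {..<n}"
    by (rule main_rec[OF q1 q0 qh finite_lessThan N0 snz nzA nzB]) (use N0 in auto)
  also have "Rf q s {..<n} = (\<Sum>P\<in>Pi0 n. (-1) ^ (n + card P) * Upi q P s)"
    by (rule sum_Pi0[OF n, symmetric])
  also have "(prod s {..<n})\<^sup>2 = (\<Prod>i<n. (s i)\<^sup>2)"
    by (simp add: prod_power_distrib)
  finally show ?thesis by simp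
qed

end
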